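(* Let $\tau>0$, $\lambda=1-\tau^2$, and let $\gamma:I\subset\mathbb{R}\to H$, $\gamma(s)=(e^{iy(s)}\cos x(s),\sin x(s))$, be the profile curve of a rotationally invariant surface $\Phi(s,t)=(e^{iy(s)}\cos x(s), e^{it}\sin x(s))$ in $\mathbb{S}^3_\tau$ with Gauss curvature $K$. Then, after a suitable reparametrization of $\gamma$, there exists a function $\alpha:I\to\mathbb{R}$ such that $x,y,\alpha$ satisfy \[ \begin{aligned} x'&=\cos\alpha,\\ y'&=\frac{1}{\tau}\frac{\sqrt{1-\lambda\sin^2x}}{\cos x}\sin\alpha,\\ \alpha'&=\frac{\tan x}{\sin\alpha}\left[\frac{1-\lambda\sin^2x}{1-2\lambda\sin^2x}K-\cos^2\alpha\left(\frac{1-\lambda}{1-\lambda\sin^2x}+\frac{4\lambda\cos^2x}{1-2\lambda\sin^2x}\right)\right]. \end{aligned} \] Moreover, if $K$ is constant and $(x(s),y(s),\alpha(s))$ is a solution of this system, then the quantity \[ \mathcal{E}=\frac{(1-2\lambda\sin^2x)^2}{1-\lambda\sin^2x}\cos^2x\cos^2\alpha+K(1-\lambda\sin^2x)\sin^2x \] is constant.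
   Context: The Berger sphere $\mathbb{S}^3_\tau$ ($\tau>0$) is the set $\{(z,w)\in\mathbb{C}^2: |z|^2+|w|^2=1\}$ with the metric $g_\tau(X,Y)=\langle X,Y\rangle-(1-\tau^2)\langle X,V\rangle\langle Y,V\rangle$, where $\langle\cdot,\cdot\rangle$ is the metric induced from the Euclidean metric of $\mathbb{C}^2=\mathbb{R}^4$ and $V_{(z,w)}=(iz,iw)$. A surface is rotationally invariant if it is invariant under the group $\mathrm{Rot}=\{(z,w)\mapsto(z,e^{it}w): t\in\mathbb{R}\}$. The orbit space $\mathbb{S}^3_\tau/\mathrm{Rot}$ is identified with the closed hemisphere $H=\{(z,a)\in\mathbb{C}\times\mathbb{R}: |z|^2+a^2=1,\ a\ge0\}\subset\mathbb{S}^2(1)$, and a rotationally invariant surface is the $\mathrm{Rot}$-orbit of a profile curve $\gamma(s)=(e^{iy(s)}\cos x(s),\sin x(s))$ with $\sin x(s)\ge 0$, parametrized by $\Phi(s,t)=(e^{iy(s)}\cos x(s),e^{it}\sin x(s))$. *)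

theory Defs
  imports "HOL-Analysis.Analysis"
begin

text \<open>C-infinity on a set S (intended: open S): derivatives of all orders exist at every point of S.\<close>
definition smooth_on :: "real set \<Rightarrow> (real \<Rightarrow> real) \<Rightarrow> bool" where
  "smooth_on S f \<longleftrightarrow> (\<exists>D :: nat \<Rightarrow> real \<Rightarrow> real. D 0 = f \<and>
      (\<forall>k. \<forall>s\<in>S. (D k has_real_derivative D (Suc k) s) (at s)))"

definition berger_V :: "complex \<times> complex \<Rightarrow> complex \<times> complex" where
  "berger_V p = (\<i> * fst p, \<i> * snd p)"

definition berger_metric :: "real \<Rightarrow> complex \<times> complex \<Rightarrow> complex \<times> complex \<Rightarrow> complex \<times> complex \<Rightarrow> real" where
  "berger_metric \<tau> p X Y = inner X Y - (1 - \<tau>\<^sup>2) * inner X (berger_V p) * inner Y (berger_V p)"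

definition rot_surface :: "(real \<Rightarrow> real) \<Rightarrow> (real \<Rightarrow> real) \<Rightarrow> real \<times> real \<Rightarrow> complex \<times> complex" where
  "rot_surface x y st =
     (exp (\<i> * complex_of_real (y (fst st))) * complex_of_real (cos (x (fst st))),
      exp (\<i> * complex_of_real (snd st)) * complex_of_real (sin (x (fst st))))"

definition d_s :: "(real \<times> real \<Rightarrow> 'a::real_normed_vector) \<Rightarrow> real \<times> real \<Rightarrow> 'a" where
  "d_s f st = vector_derivative (\<lambda>\<sigma>. f (\<sigma>, snd st)) (at (fst st))"

definition d_t :: "(real \<times> real \<Rightarrow> 'a::real_normed_vector) \<Rightarrow> real \<times> real \<Rightarrow> 'a" where
  "d_t f st = vector_derivative (\<lambda>\<sigma>. f (fst st, \<sigma>)) (at (snd st))"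

definition fff_E :: "real \<Rightarrow> (real \<times> real \<Rightarrow> complex \<times> complex) \<Rightarrow> real \<times> real \<Rightarrow> real" where
  "fff_E \<tau> \<Phi> st = berger_metric \<tau> (\<Phi> st) (d_s \<Phi> st) (d_s \<Phi> st)"

definition fff_F :: "real \<Rightarrow> (real \<times> real \<Rightarrow> complex \<times> complex) \<Rightarrow> real \<times> real \<Rightarrow> real" where
  "fff_F \<tau> \<Phi> st = berger_metric \<tau> (\<Phi> st) (d_s \<Phi> st) (d_t \<Phi> st)"

definition fff_G :: "real \<Rightarrow> (real \<times> real \<Rightarrow> complex \<times> complex) \<Rightarrow> real \<times> real \<Rightarrow> real" where
  "fff_G \<tau> \<Phi> st = berger_metric \<tau> (\<Phi> st) (d_t \<Phi> st) (d_t \<Phi> st)"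

definition det3 :: "real \<Rightarrow> real \<Rightarrow> real \<Rightarrow> real \<Rightarrow> real \<Rightarrow> real \<Rightarrow> real \<Rightarrow> real \<Rightarrow> real \<Rightarrow> real" where
  "det3 a b c d e f g h i = a * (e * i - f * h) - b * (d * i - f * g) + c * (d * h - e * g)"

definition brioschi_K :: "(real \<times> real \<Rightarrow> real) \<Rightarrow> (real \<times> real \<Rightarrow> real) \<Rightarrow> (real \<times> real \<Rightarrow> real) \<Rightarrow> real \<times> real \<Rightarrow> real" where
  "brioschi_K E F G p =
    (det3 (- d_t (d_t E) p / 2 + d_s (d_t F) p - d_s (d_s G) p / 2) (d_s E p / 2) (d_s F p - d_t E p / 2)
          (d_t F p - d_s G p / 2) (E p) (F p)
          (d_t G p / 2) (F p) (G p)
   - det3 0 (d_t E p / 2) (d_s G p / 2)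
          (d_t E p / 2) (E p) (F p)
          (d_s G p / 2) (F p) (G p))
   / (E p * G p - (F p)\<^sup>2)\<^sup>2"

definition rot_gauss_curvature :: "real \<Rightarrow> (real \<Rightarrow> real) \<Rightarrow> (real \<Rightarrow> real) \<Rightarrow> real \<times> real \<Rightarrow> real" where
  "rot_gauss_curvature \<tau> x y =
     brioschi_K (fff_E \<tau> (rot_surface x y)) (fff_F \<tau> (rot_surface x y)) (fff_G \<tau> (rot_surface x y))"

end

theory Submission
  imports Defs
begin



fun Cn :: "real set \<Rightarrow> nat \<Rightarrow> (real \<Rightarrow> real) \<Rightarrow> bool" where
  "Cn S 0 f = True"
| "Cn S (Suc n) f = ((\<forall>s\<in>S. f differentiable (at s)) \<and> Cn S n (deriv f))"

lemma deriv_local: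
  assumes "open S" "s \<in> S" "\<And>u. u \<in> S \<Longrightarrow> f u = g u"
  shows "deriv f s = deriv g s"
proof (rule deriv_cong_ev)
  show "\<forall>\<^sub>F x in nhds s. f x = g x"
    unfolding eventually_nhds using assms by blast
qed simp

lemma differentiable_local:
  assumes "f differentiable (at s)" "open S" "s \<in> S" "\<And>u. u \<in> S \<Longrightarrow> f u = g u"
  shows "g differentiable (at s)"
proof -
  obtain D where "(f has_derivative D) (at s)" using assms(1) unfolding differentiable_def by blast
  then have "(g has_derivative D) (at s)"
    by (rule has_derivative_transform_within_open[OF _ assms(2,3) assms(4)])
  then show ?thesis unfolding differentiable_def by blast
qed

lemma Cn_cong:
  assumes "open S" "\<And>s. s \<in> S \<Longrightarrow> f s = g s" "Cn S n f"
  shows "Cn S n g"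
  using assms(2,3)
proof (induction n arbitrary: f g)
  case 0 then show ?case by simp
next
  case (Suc n)
  have d: "\<forall>s\<in>S. g differentiable (at s)"
  proof
    fix s assume s: "s \<in> S"
    have "f differentiable (at s)" using Suc.prems(2) s by simp
    then show "g differentiable (at s)"
      by (rule differentiable_local[OF _ assms(1) s]) (rule Suc.prems(1))
  qed
  have "\<And>s. s \<in> S \<Longrightarrow> deriv f s = deriv g s"
    using deriv_local[OF assms(1)] Suc.prems(1) by blast
  then have "Cn S n (deriv g)" using Suc.IH[of "deriv f" "deriv g"] Suc.prems by simp
  then show ?case using d by simp
qed

lemma Cn_Suc_mono: "Cn S (Suc n) f \<Longrightarrow> Cn S n f"
proof (induction n arbitrary: f)
  case 0 then show ?case by simp
next
  case (Suc n) then show ?case by simp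
qed

lemma Cn_le: "m \<le> n \<Longrightarrow> Cn S n f \<Longrightarrow> Cn S m f"
proof (induction n)
  case 0 then show ?case by simp
next
  case (Suc n) then show ?case using Cn_Suc_mono by (metis le_Suc_eq)
qed

lemma Cn_diff: "Cn S (Suc n) f \<Longrightarrow> s \<in> S \<Longrightarrow> (f has_real_derivative deriv f s) (at s)"
  by (simp add: DERIV_deriv_iff_real_differentiable)

lemma Cn_const: "Cn S n (\<lambda>_. c)"
proof (induction n arbitrary: c)
  case 0 then show ?case by simp
next
  case (Suc n)
  have "deriv (\<lambda>_. c) = (\<lambda>_. 0)" by (rule ext) simp
  then show ?case using Suc by simp
qed

lemma Cn_add:
  assumes "open S" "Cn S n f" "Cn S n g"
  shows "Cn S n (\<lambda>s. f s + g s)"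
  using assms(2,3)
proof (induction n arbitrary: f g)
  case 0 then show ?case by simp
next
  case (Suc n)
  have df: "\<And>s. s \<in> S \<Longrightarrow> (f has_real_derivative deriv f s) (at s)"
   and dg: "\<And>s. s \<in> S \<Longrightarrow> (g has_real_derivative deriv g s) (at s)"
    using Suc.prems Cn_diff by blast+
  have "\<And>s. s \<in> S \<Longrightarrow> ((\<lambda>s. f s + g s) has_real_derivative deriv f s + deriv g s) (at s)"
    using df dg by (auto intro!: derivative_eq_intros)
  then have D: "\<And>s. s \<in> S \<Longrightarrow> deriv (\<lambda>s. f s + g s) s = deriv f s + deriv g s"
    and dd: "\<forall>s\<in>S. (\<lambda>s. f s + g s) differentiable (at s)"
    by (auto intro: DERIV_imp_deriv real_differentiable_def[THEN iffD2])
  have "Cn S n (\<lambda>s. deriv f s + deriv g s)" using Suc by simp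
  then have "Cn S n (deriv (\<lambda>s. f s + g s))"
    by (rule Cn_cong[OF assms(1), rotated]) (simp add: D)
  then show ?case using dd by simp
qed

lemma Cn_mult:
  assumes "open S" "Cn S n f" "Cn S n g"
  shows "Cn S n (\<lambda>s. f s * g s)"
  using assms(2,3)
proof (induction n arbitrary: f g)
  case 0 then show ?case by simp
next
  case (Suc n)
  have df: "\<And>s. s \<in> S \<Longrightarrow> (f has_real_derivative deriv f s) (at s)"
   and dg: "\<And>s. s \<in> S \<Longrightarrow> (g has_real_derivative deriv g s) (at s)"
    using Suc.prems Cn_diff by blast+
  have "\<And>s. s \<in> S \<Longrightarrow> ((\<lambda>s. f s * g s) has_real_derivative deriv f s * g s + f s * deriv g s) (at s)"
    using df dg by (auto intro!: derivative_eq_intros)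
  then have D: "\<And>s. s \<in> S \<Longrightarrow> deriv (\<lambda>s. f s * g s) s = deriv f s * g s + f s * deriv g s"
    and dd: "\<forall>s\<in>S. (\<lambda>s. f s * g s) differentiable (at s)"
    by (auto intro: DERIV_imp_deriv real_differentiable_def[THEN iffD2])
  have "Cn S n f" "Cn S n g" using Suc.prems Cn_Suc_mono by blast+
  then have "Cn S n (\<lambda>s. deriv f s * g s + f s * deriv g s)"
    using Suc by (intro Cn_add[OF assms(1)]) auto
  then have "Cn S n (deriv (\<lambda>s. f s * g s))"
    by (rule Cn_cong[OF assms(1), rotated]) (simp add: D)
  then show ?case using dd by simp
qed


lemma Cn_comp:
  assumes "open S" "open T" "\<And>s. s \<in> S \<Longrightarrow> f s \<in> T" "Cn T n g" "Cn S n f"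
  shows "Cn S n (\<lambda>s. g (f s))"
  using assms(3,4,5)
proof (induction n arbitrary: f g)
  case 0 then show ?case by simp
next
  case (Suc n)
  have df: "(f has_real_derivative deriv f s) (at s)" if s: "s \<in> S" for s
    by (rule Cn_diff[OF Suc.prems(3) s])
  have dg: "(g has_real_derivative deriv g (f s)) (at (f s))" if s: "s \<in> S" for s
    by (rule Cn_diff[OF Suc.prems(2) Suc.prems(1)[OF s]])
  have DD: "((\<lambda>s. g (f s)) has_real_derivative deriv g (f s) * deriv f s) (at s)" if s: "s \<in> S" for s
    by (rule DERIV_chain2[OF dg[OF s] df[OF s]])
  then have D: "\<And>s. s \<in> S \<Longrightarrow> deriv (\<lambda>s. g (f s)) s = deriv g (f s) * deriv f s"
    by (simp add: DERIV_imp_deriv)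
  have dd: "\<forall>s\<in>S. (\<lambda>s. g (f s)) differentiable (at s)"
    using DD real_differentiable_def by blast
  have "Cn S n f" using Suc.prems(3) Cn_Suc_mono by blast
  moreover have "Cn T n (deriv g)" using Suc.prems(2) by simp
  ultimately have "Cn S n (\<lambda>s. deriv g (f s))" using Suc.IH Suc.prems(1) by blast
  moreover have "Cn S n (deriv f)" using Suc.prems(3) by simp
  ultimately have "Cn S n (\<lambda>s. deriv g (f s) * deriv f s)"
    by (rule Cn_mult[OF assms(1)])
  then have "Cn S n (deriv (\<lambda>s. g (f s)))"
    by (rule Cn_cong[OF assms(1), rotated]) (simp add: D)
  then show ?case using dd by simp
qed

lemma Cn_inverse:
  assumes "open S" "Cn S n f" "\<And>s. s \<in> S \<Longrightarrow> f s \<noteq> 0"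
  shows "Cn S n (\<lambda>s. inverse (f s))"
  using assms(2,3)
proof (induction n arbitrary: f)
  case 0 then show ?case by simp
next
  case (Suc n)
  have df: "\<And>s. s \<in> S \<Longrightarrow> (f has_real_derivative deriv f s) (at s)"
    using Suc.prems(1) Cn_diff by blast
  have DD: "\<And>s. s \<in> S \<Longrightarrow> ((\<lambda>s. inverse (f s)) has_real_derivative (-1) * (deriv f s * (inverse (f s) * inverse (f s)))) (at s)"
  proof -
    fix s assume s: "s \<in> S"
    have "((\<lambda>s. inverse (f s)) has_real_derivative - (inverse (f s) * deriv f s * inverse (f s))) (at s)"
      by (rule DERIV_inverse'[OF df[OF s] Suc.prems(2)[OF s]])
    then show "?thesis s" by (simp add: algebra_simps)
  qed
  then have D: "\<And>s. s \<in> S \<Longrightarrow> deriv (\<lambda>s. inverse (f s)) s = (-1) * (deriv f s * (inverse (f s) * inverse (f s)))"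
    by (simp add: DERIV_imp_deriv)
  have dd: "\<forall>s\<in>S. (\<lambda>s. inverse (f s)) differentiable (at s)"
    using DD real_differentiable_def by blast
  have "Cn S n f" using Suc.prems(1) Cn_Suc_mono by blast
  then have i: "Cn S n (\<lambda>s. inverse (f s))" using Suc.IH Suc.prems(2) by blast
  have df': "Cn S n (deriv f)" using Suc.prems(1) by simp
  have ii: "Cn S n (\<lambda>s. inverse (f s) * inverse (f s))" by (rule Cn_mult[OF assms(1) i i])
  have "Cn S n (\<lambda>s. deriv f s * (inverse (f s) * inverse (f s)))"
    by (rule Cn_mult[OF assms(1) df' ii])
  then have "Cn S n (\<lambda>s. (-1) * (deriv f s * (inverse (f s) * inverse (f s))))"
    by (rule Cn_mult[OF assms(1) Cn_const])
  then have "Cn S n (deriv (\<lambda>s. inverse (f s)))"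
    by (rule Cn_cong[OF assms(1), rotated]) (simp add: D)
  then show ?case using dd by simp
qed

lemma Cn_sin_cos: "Cn UNIV n sin \<and> Cn UNIV n cos"
proof (induction n)
  case 0 then show ?case by simp
next
  case (Suc n)
  have a: "deriv (sin :: real \<Rightarrow> real) = cos" by (rule ext) (rule DERIV_imp_deriv, rule DERIV_sin)
  have b: "deriv (cos :: real \<Rightarrow> real) = (\<lambda>x. (-1) * sin x)" by (rule ext) (rule DERIV_imp_deriv, auto intro!: derivative_eq_intros)
  have "Cn UNIV n (\<lambda>x. (-1) * sin x)" using Suc by (intro Cn_mult Cn_const) auto
  moreover have "\<forall>s\<in>UNIV. (sin :: real \<Rightarrow> real) differentiable (at s)"
    unfolding real_differentiable_def using DERIV_sin by blast
  moreover have "\<forall>s\<in>UNIV. (cos :: real \<Rightarrow> real) differentiable (at s)"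
    unfolding real_differentiable_def using DERIV_cos by blast
  ultimately show ?case using Suc a b by simp
qed

lemma Cn_sqrt: "Cn {0<..} n sqrt"
proof (induction n)
  case 0 then show ?case by simp
next
  case (Suc n)
  have D: "\<And>s. s \<in> {0<..} \<Longrightarrow> deriv sqrt s = inverse (sqrt s) * (1/2)"
    by (rule DERIV_imp_deriv) (auto intro!: derivative_eq_intros)
  have dd: "\<forall>s\<in>{0<..}. sqrt differentiable (at s)"
    unfolding real_differentiable_def using DERIV_real_sqrt by auto
  have "Cn {0<..} n (\<lambda>s. inverse (sqrt s) * (1/2))"
    using Suc by (intro Cn_mult Cn_inverse Cn_const) auto
  then have "Cn {0<..} n (deriv sqrt)"
    by (rule Cn_cong[OF open_greaterThan, rotated]) (simp add: D)
  then show ?case using dd by simp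
qed

lemma Cn_funpow: "Cn S (k + m) f \<Longrightarrow> Cn S m ((deriv ^^ k) f)"
proof (induction k arbitrary: f)
  case 0 then show ?case by simp
next
  case (Suc k)
  then have "Cn S (k + m) (deriv f)" by simp
  then have "Cn S m ((deriv ^^ k) (deriv f))" using Suc.IH by blast
  then show ?case by (simp add: funpow_Suc_right del: funpow.simps)
qed

lemma Cn_imp_smooth:
  assumes "\<And>n. Cn S n f" shows "smooth_on S f"
  unfolding smooth_on_def
proof (intro exI[of _ "\<lambda>k. (deriv ^^ k) f"] conjI allI ballI)
  fix k s assume s: "s \<in> S"
  have "Cn S (k + 1) f" by (rule assms)
  then have "Cn S 1 ((deriv ^^ k) f)" by (rule Cn_funpow)
  then show "((deriv ^^ k) f has_real_derivative (deriv ^^ Suc k) f s) (at s)"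
    using s by (simp add: DERIV_deriv_iff_real_differentiable)
qed simp

lemma smooth_imp_Cn:
  assumes "open S" "smooth_on S f" shows "Cn S n f"
proof -
  obtain D where D: "D 0 = f" "\<And>k s. s \<in> S \<Longrightarrow> (D k has_real_derivative D (Suc k) s) (at s)"
    using assms(2) unfolding smooth_on_def by blast
  have "\<And>D f. D 0 = f \<Longrightarrow> (\<And>k s. s \<in> S \<Longrightarrow> (D k has_real_derivative D (Suc k) s) (at s)) \<Longrightarrow> Cn S n f"
  proof (induction n)
    case 0 then show ?case by simp
  next
    case (Suc n)
    have dd: "\<forall>s\<in>S. f differentiable (at s)"
      using Suc.prems(2)[of _ 0] Suc.prems(1) real_differentiable_def by blast
    have "Cn S n (D 1)" using Suc.IH[of "\<lambda>k. D (Suc k)" "D 1"] Suc.prems(2) by simp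
    moreover have "\<And>s. s \<in> S \<Longrightarrow> D 1 s = deriv f s"
      using Suc.prems(2)[of _ 0] Suc.prems(1) DERIV_imp_deriv by (metis One_nat_def)
    ultimately have "Cn S n (deriv f)"
      by (rule Cn_cong[OF assms(1), rotated])
    then show ?case using dd by simp
  qed
  then show ?thesis using D by blast
qed

lemma Cn_pow2:
  assumes "open S" "Cn S n f" shows "Cn S n (\<lambda>s. (f s)\<^sup>2)"
proof -
  have "Cn S n (\<lambda>s. f s * f s)" by (rule Cn_mult[OF assms(1) assms(2) assms(2)])
  then show ?thesis by (rule Cn_cong[OF assms(1), rotated]) (simp add: power2_eq_square)
qed

lemma Cn_sub:
  assumes "open S" "Cn S n f" "Cn S n g" shows "Cn S n (\<lambda>s. f s - g s)"
proof -
  have "Cn S n (\<lambda>s. f s + (-1) * g s)"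
    by (rule Cn_add[OF assms(1) assms(2) Cn_mult[OF assms(1) Cn_const assms(3)]])
  then show ?thesis by (rule Cn_cong[OF assms(1), rotated]) simp
qed

lemma Cn_divide:
  assumes "open S" "Cn S n f" "Cn S n g" "\<And>s. s \<in> S \<Longrightarrow> g s \<noteq> 0"
  shows "Cn S n (\<lambda>s. f s / g s)"
proof -
  have "Cn S n (\<lambda>s. f s * inverse (g s))"
    by (rule Cn_mult[OF assms(1) assms(2) Cn_inverse[OF assms(1) assms(3) assms(4)]])
  then show ?thesis by (rule Cn_cong[OF assms(1), rotated]) (simp add: divide_inverse)
qed

lemma Cn_diff':
  assumes "Cn S (Suc n) f" "s \<in> S" shows "f differentiable (at s)"
  using assms by simp

lemma Cn_cont:
  assumes "Cn S (Suc n) f" shows "continuous_on S f"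
proof (rule continuous_at_imp_continuous_on, rule ballI)
  fix s assume "s \<in> S"
  then have "f differentiable (at s)" using assms by simp
  then show "isCont f s" by (rule differentiable_imp_continuous_within)
qed



lemma interval_sub:
  assumes "is_interval (I::real set)" "d \<in> I" "e \<in> I" shows "{d..e} \<subseteq> I"
proof (rule subsetI)
  fix x assume "x \<in> {d..e}"
  then have "d \<le> x" "x \<le> e" by auto
  then show "x \<in> I" using mem_is_interval_1_I[OF assms(1) assms(2) assms(3)] by blast
qed

lemma open_below_above:
  assumes "open (I::real set)" "z \<in> I"
  obtains d e where "d \<in> I" "e \<in> I" "d < z" "z < e" "cball z (z - d) \<subseteq> I"
proof -
  obtain r where r: "r > 0" "ball z r \<subseteq> I" using assms open_contains_ball by blast
  have c: "cball z (r/2) \<subseteq> ball z r" using r by (simp add: cball_subset_ball_iff)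
  have d: "z - r/2 \<in> ball z r" "z + r/2 \<in> ball z r" using r by (simp_all add: dist_real_def)
  have e: "z - (z - r/2) = r/2" by simp
  show ?thesis
    apply (rule that[of "z - r/2" "z + r/2"])
    using r c d unfolding e by auto
qed

lemma antideriv:
  fixes f :: "real \<Rightarrow> real"
  assumes I: "open I" "is_interval I" and cont: "continuous_on I f" and c: "c \<in> I"
  shows "\<exists>F. \<forall>x\<in>I. (F has_real_derivative f x) (at x)"
proof (intro exI ballI)
  fix x assume x: "x \<in> I"
  have "min c x \<in> I" "max c x \<in> I" using c x by (auto simp: min_def max_def)
  then obtain d e where de: "d \<in> I" "e \<in> I" "d < min c x" "max c x < e"
    using open_below_above[OF I(1)] by metis
  have sub: "{d..e} \<subseteq> I" using interval_sub[OF I(2) de(1,2)] .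
  have "((\<lambda>u. LBINT y=c..u. f y) has_vector_derivative f x) (at x within {d..e})"
    using de by (intro interval_integral_FTC2 continuous_on_subset[OF cont sub]) auto
  then have "((\<lambda>u. LBINT y=c..u. f y) has_vector_derivative f x) (at x within {d<..<e})"
    by (rule has_vector_derivative_within_subset) auto
  then have "((\<lambda>u. LBINT y=c..u. f y) has_vector_derivative f x) (at x)"
    using de at_within_open[of x "{d<..<e}"] by auto
  then show "((\<lambda>u. LBINT y=c..u. f y) has_real_derivative f x) (at x)"
    by (simp add: has_real_derivative_iff_has_vector_derivative)
qed

lemma P_pos:
  fixes \<tau> lam a :: real
  assumes "\<tau> > 0" "lam = 1 - \<tau>\<^sup>2"
  shows "1 - lam * (sin a)\<^sup>2 > 0"
proof -
  have s: "0 \<le> (sin a)\<^sup>2" "(sin a)\<^sup>2 \<le> 1" by (auto simp: abs_square_le_1)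
  have l: "lam < 1" using assms by simp
  show ?thesis
  proof (cases "lam \<ge> 0")
    case True
    then have "lam * (sin a)\<^sup>2 \<le> lam" using s mult_left_le by blast
    then show ?thesis using l by linarith
  next
    case False
    then have "lam * (sin a)\<^sup>2 \<le> 0" using s by (simp add: mult_nonpos_nonneg)
    then show ?thesis by linarith
  qed
qed



lemma reparam:
  assumes I: "open I" "is_interval I" "I \<noteq> {}"
   and L: "\<And>n. Cn I n L" "\<And>s. s \<in> I \<Longrightarrow> L s > 0"
  obtains J \<phi> where "open J" "is_interval J" "bij_betw \<phi> J I" "\<And>n. Cn J n \<phi>"
    "\<And>\<sigma>. \<sigma> \<in> J \<Longrightarrow> (\<phi> has_real_derivative inverse (L (\<phi> \<sigma>))) (at \<sigma>)"
proof -
  obtain c where c: "c \<in> I" using I(3) by blast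
  have Ld: "\<And>s. s \<in> I \<Longrightarrow> L differentiable (at s)" using L(1)[of 1] by simp
  have contL: "continuous_on I L"
    by (rule continuous_at_imp_continuous_on) (use Ld differentiable_imp_continuous_within in blast)
  obtain \<psi> where \<psi>: "\<And>s. s \<in> I \<Longrightarrow> (\<psi> has_real_derivative L s) (at s)"
    using antideriv[OF I(1,2) contL c] by blast
  have mono: "\<psi> a < \<psi> b" if ab: "a \<in> I" "b \<in> I" "a < b" for a b
  proof -
    have sub: "{a..b} \<subseteq> I" by (rule interval_sub[OF I(2) ab(1,2)])
    show ?thesis
    proof (rule DERIV_pos_imp_increasing[OF ab(3)])
      fix x assume "a \<le> x" "x \<le> b"
      then have "x \<in> I" using sub by auto
      then show "\<exists>y. DERIV \<psi> x :> y \<and> 0 < y" using \<psi> L(2) by blast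
    qed
  qed
  have inj: "inj_on \<psi> I"
  proof (rule inj_onI)
    fix a b assume "a \<in> I" "b \<in> I" "\<psi> a = \<psi> b"
    then show "a = b" using mono[of a b] mono[of b a] by (metis less_irrefl linorder_neqE_linordered_idom)
  qed
  define J where "J = \<psi> ` I"
  define \<phi> where "\<phi> = inv_into I \<psi>"
  have bij: "bij_betw \<phi> J I" unfolding \<phi>_def J_def
    by (rule bij_betw_inv_into) (simp add: bij_betw_def inj)
  have cont\<psi>: "continuous_on I \<psi>"
    by (rule continuous_at_imp_continuous_on) (use \<psi> DERIV_isCont in blast)
  have intJ: "is_interval J" unfolding J_def is_interval_connected_1
    by (rule connected_continuous_image[OF cont\<psi>]) (rule is_interval_connected[OF I(2)])
  have \<phi>\<psi>: "\<And>s. s \<in> I \<Longrightarrow> \<phi> (\<psi> s) = s" unfolding \<phi>_def using inj by (simp add: inv_into_f_f)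
  have \<psi>\<phi>: "\<And>\<sigma>. \<sigma> \<in> J \<Longrightarrow> \<psi> (\<phi> \<sigma>) = \<sigma>" unfolding \<phi>_def J_def by (simp add: f_inv_into_f)
  have \<phi>I: "\<And>\<sigma>. \<sigma> \<in> J \<Longrightarrow> \<phi> \<sigma> \<in> I" unfolding \<phi>_def J_def by (simp add: inv_into_into)
  have local: "\<exists>a b. a < \<sigma> \<and> \<sigma> < b \<and> {a<..<b} \<subseteq> J \<and> (\<phi> has_real_derivative inverse (L (\<phi> \<sigma>))) (at \<sigma>)"
    if \<sigma>: "\<sigma> \<in> J" for \<sigma>
  proof -
    define s where "s = \<phi> \<sigma>"
    have s: "s \<in> I" "\<psi> s = \<sigma>" using \<phi>I \<psi>\<phi> \<sigma> s_def by auto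
    obtain d e where de: "d \<in> I" "e \<in> I" "d < s" "s < e" "cball s (s - d) \<subseteq> I"
      using open_below_above[OF I(1) s(1)] by blast
    have lt: "\<psi> d < \<sigma>" "\<sigma> < \<psi> e" using mono de s by auto
    have dJ: "\<psi> d \<in> J" "\<psi> e \<in> J" using de unfolding J_def by auto
    have sub: "{\<psi> d<..<\<psi> e} \<subseteq> J"
    proof
      fix y assume "y \<in> {\<psi> d<..<\<psi> e}"
      then have "\<psi> d \<le> y" "y \<le> \<psi> e" by auto
      then show "y \<in> J" using mem_is_interval_1_I[OF intJ dJ(1) dJ(2)] by blast
    qed
    have cball: "z \<in> I" if "\<bar>z - s\<bar> \<le> s - d" for z
      using de(5) that by (auto simp: dist_real_def subset_iff)
    have "isCont \<phi> (\<psi> s)"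
    proof (rule isCont_inverse_function[where d = "s - d" and f = \<psi> and g = \<phi> and x = s])
      show "0 < s - d" using de by simp
      show "\<And>z. \<bar>z - s\<bar> \<le> s - d \<Longrightarrow> \<phi> (\<psi> z) = z" using cball \<phi>\<psi> by blast
      show "\<And>z. \<bar>z - s\<bar> \<le> s - d \<Longrightarrow> isCont \<psi> z" using cball \<psi> DERIV_isCont by blast
    qed
    then have cont: "isCont \<phi> \<sigma>" using s by simp
    have "(\<phi> has_real_derivative inverse (L s)) (at \<sigma>)"
    proof (rule DERIV_inverse_function[OF _ _ lt])
      show "DERIV \<psi> (\<phi> \<sigma>) :> L s" using \<psi> s s_def by simp
      show "L s \<noteq> 0" using L(2) s by (metis less_irrefl)
      show "\<And>y. \<psi> d < y \<Longrightarrow> y < \<psi> e \<Longrightarrow> \<psi> (\<phi> y) = y" using sub \<psi>\<phi> by auto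
      show "isCont \<phi> \<sigma>" by (rule cont)
    qed
    then show ?thesis using lt sub s_def by blast
  qed
  have openJ: "open J"
  proof (rule open_subopen[THEN iffD2], rule ballI)
    fix \<sigma> assume \<sigma>: "\<sigma> \<in> J"
    obtain a b where ab: "a < \<sigma>" "\<sigma> < b" "{a<..<b} \<subseteq> J" using local[OF \<sigma>] by blast
    show "\<exists>T. open T \<and> \<sigma> \<in> T \<and> T \<subseteq> J"
    proof (intro exI conjI)
      show "open {a<..<b}" by simp
      show "\<sigma> \<in> {a<..<b}" using ab by simp
      show "{a<..<b} \<subseteq> J" by (rule ab(3))
    qed
  qed
  have der: "\<And>\<sigma>. \<sigma> \<in> J \<Longrightarrow> (\<phi> has_real_derivative inverse (L (\<phi> \<sigma>))) (at \<sigma>)"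
    using local by metis
  have LinvCn: "Cn I n (\<lambda>s. inverse (L s))" for n
  proof (rule Cn_inverse[OF I(1) L(1)])
    fix s assume "s \<in> I" then have "L s > 0" by (rule L(2))
    then show "L s \<noteq> 0" by simp
  qed
  have Cn\<phi>: "Cn J n \<phi>" for n
  proof (induction n)
    case 0 then show ?case by simp
  next
    case (Suc n)
    have dd: "\<forall>s\<in>J. \<phi> differentiable (at s)"
      using der real_differentiable_def by auto
    have "Cn J n (\<lambda>\<sigma>. inverse (L (\<phi> \<sigma>)))"
      by (rule Cn_comp[OF openJ I(1) \<phi>I LinvCn Suc.IH])
    then have "Cn J n (deriv \<phi>)"
      by (rule Cn_cong[OF openJ, rotated]) (metis der DERIV_imp_deriv)
    then show ?case using dd by simp
  qed
  show ?thesis using that[OF openJ intJ bij Cn\<phi> der] .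
qed



lemma const_on_interval:
  fixes f f' :: "real \<Rightarrow> real"
  assumes "is_interval J" "\<And>\<sigma>. \<sigma> \<in> J \<Longrightarrow> (f has_real_derivative 0) (at \<sigma>)" "a \<in> J" "b \<in> J"
  shows "f a = f b"
proof -
  have "convex J" using assms(1) is_interval_convex_1 by blast
  then obtain k where "\<forall>x\<in>J. f x = k"
    using has_field_derivative_zero_constant[of J f] assms(2) has_field_derivative_at_within by blast
  then show ?thesis using assms(3,4) by simp
qed

lemma angle_lift:
  fixes c w c' w' :: "real \<Rightarrow> real"
  assumes J: "open J" "is_interval J" "J \<noteq> {}"
   and dc: "\<And>\<sigma>. \<sigma> \<in> J \<Longrightarrow> (c has_real_derivative c' \<sigma>) (at \<sigma>)"
   and dw: "\<And>\<sigma>. \<sigma> \<in> J \<Longrightarrow> (w has_real_derivative w' \<sigma>) (at \<sigma>)"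
   and cont: "continuous_on J (\<lambda>\<sigma>. c \<sigma> * w' \<sigma> - w \<sigma> * c' \<sigma>)"
   and unit: "\<And>\<sigma>. \<sigma> \<in> J \<Longrightarrow> (c \<sigma>)\<^sup>2 + (w \<sigma>)\<^sup>2 = 1"
   and dunit: "\<And>\<sigma>. \<sigma> \<in> J \<Longrightarrow> c \<sigma> * c' \<sigma> + w \<sigma> * w' \<sigma> = 0"
  obtains \<alpha> where "\<And>\<sigma>. \<sigma> \<in> J \<Longrightarrow> (\<alpha> has_real_derivative (c \<sigma> * w' \<sigma> - w \<sigma> * c' \<sigma>)) (at \<sigma>)"
    "\<And>\<sigma>. \<sigma> \<in> J \<Longrightarrow> cos (\<alpha> \<sigma>) = c \<sigma>" "\<And>\<sigma>. \<sigma> \<in> J \<Longrightarrow> sin (\<alpha> \<sigma>) = w \<sigma>"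
proof -
  define h where "h = (\<lambda>\<sigma>. c \<sigma> * w' \<sigma> - w \<sigma> * c' \<sigma>)"
  obtain \<sigma>0 where \<sigma>0: "\<sigma>0 \<in> J" using J(3) by blast
  obtain F where F: "\<And>\<sigma>. \<sigma> \<in> J \<Longrightarrow> (F has_real_derivative h \<sigma>) (at \<sigma>)"
    using antideriv[OF J(1,2) _ \<sigma>0, of h] cont unfolding h_def by blast
  obtain \<theta> where \<theta>: "c \<sigma>0 = cos \<theta>" "w \<sigma>0 = sin \<theta>"
    using sincos_total_2pi[OF unit[OF \<sigma>0]] by metis
  define \<alpha> where "\<alpha> = (\<lambda>\<sigma>. F \<sigma> - F \<sigma>0 + \<theta>)"
  have d\<alpha>: "(\<alpha> has_real_derivative h \<sigma>) (at \<sigma>)" if "\<sigma> \<in> J" for \<sigma>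
    unfolding \<alpha>_def using F[OF that] by (auto intro!: derivative_eq_intros)
  have \<alpha>0: "\<alpha> \<sigma>0 = \<theta>" unfolding \<alpha>_def by simp
  have k1: "c' \<sigma> + w \<sigma> * h \<sigma> = 0" if "\<sigma> \<in> J" for \<sigma>
  proof -
    have "c' \<sigma> + w \<sigma> * h \<sigma> = c \<sigma> * (c \<sigma> * c' \<sigma> + w \<sigma> * w' \<sigma>) + c' \<sigma> * (1 - ((c \<sigma>)\<^sup>2 + (w \<sigma>)\<^sup>2))"
      unfolding h_def by (simp add: algebra_simps power2_eq_square)
    then show ?thesis using unit[OF that] dunit[OF that] by simp
  qed
  have k2: "w' \<sigma> - c \<sigma> * h \<sigma> = 0" if "\<sigma> \<in> J" for \<sigma>
  proof -
    have "w' \<sigma> - c \<sigma> * h \<sigma> = w \<sigma> * (c \<sigma> * c' \<sigma> + w \<sigma> * w' \<sigma>) + w' \<sigma> * (1 - ((c \<sigma>)\<^sup>2 + (w \<sigma>)\<^sup>2))"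
      unfolding h_def by (simp add: algebra_simps power2_eq_square)
    then show ?thesis using unit[OF that] dunit[OF that] by simp
  qed
  define A where "A = (\<lambda>\<sigma>. c \<sigma> * cos (\<alpha> \<sigma>) + w \<sigma> * sin (\<alpha> \<sigma>))"
  define B where "B = (\<lambda>\<sigma>. w \<sigma> * cos (\<alpha> \<sigma>) - c \<sigma> * sin (\<alpha> \<sigma>))"
  have dA: "(A has_real_derivative 0) (at \<sigma>)" if s: "\<sigma> \<in> J" for \<sigma>
  proof -
    have "(A has_real_derivative
       (c' \<sigma> * cos (\<alpha> \<sigma>) - c \<sigma> * sin (\<alpha> \<sigma>) * h \<sigma> + (w' \<sigma> * sin (\<alpha> \<sigma>) + w \<sigma> * cos (\<alpha> \<sigma>) * h \<sigma>))) (at \<sigma>)"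
      unfolding A_def using dc[OF s] dw[OF s] d\<alpha>[OF s]
      by (auto intro!: derivative_eq_intros simp: algebra_simps)
    moreover have "c' \<sigma> * cos (\<alpha> \<sigma>) - c \<sigma> * sin (\<alpha> \<sigma>) * h \<sigma> + (w' \<sigma> * sin (\<alpha> \<sigma>) + w \<sigma> * cos (\<alpha> \<sigma>) * h \<sigma>)
       = cos (\<alpha> \<sigma>) * (c' \<sigma> + w \<sigma> * h \<sigma>) + sin (\<alpha> \<sigma>) * (w' \<sigma> - c \<sigma> * h \<sigma>)"
      by (simp add: algebra_simps)
    ultimately show ?thesis using k1[OF s] k2[OF s] by simp
  qed
  have dB: "(B has_real_derivative 0) (at \<sigma>)" if s: "\<sigma> \<in> J" for \<sigma>
  proof -
    have "(B has_real_derivative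
       (w' \<sigma> * cos (\<alpha> \<sigma>) - w \<sigma> * sin (\<alpha> \<sigma>) * h \<sigma> - (c' \<sigma> * sin (\<alpha> \<sigma>) + c \<sigma> * cos (\<alpha> \<sigma>) * h \<sigma>))) (at \<sigma>)"
      unfolding B_def using dc[OF s] dw[OF s] d\<alpha>[OF s]
      by (auto intro!: derivative_eq_intros simp: algebra_simps)
    moreover have "w' \<sigma> * cos (\<alpha> \<sigma>) - w \<sigma> * sin (\<alpha> \<sigma>) * h \<sigma> - (c' \<sigma> * sin (\<alpha> \<sigma>) + c \<sigma> * cos (\<alpha> \<sigma>) * h \<sigma>)
       = cos (\<alpha> \<sigma>) * (w' \<sigma> - c \<sigma> * h \<sigma>) - sin (\<alpha> \<sigma>) * (c' \<sigma> + w \<sigma> * h \<sigma>)"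
      by (simp add: algebra_simps)
    ultimately show ?thesis using k1[OF s] k2[OF s] by simp
  qed
  have A0: "A \<sigma>0 = 1"
  proof -
    have "A \<sigma>0 = (c \<sigma>0)\<^sup>2 + (w \<sigma>0)\<^sup>2" unfolding A_def \<alpha>0 \<theta> by (simp add: power2_eq_square)
    then show ?thesis using unit[OF \<sigma>0] by simp
  qed
  have B0: "B \<sigma>0 = 0" unfolding B_def \<alpha>0 using \<theta> by simp
  have A1: "A \<sigma> = 1" if "\<sigma> \<in> J" for \<sigma> using const_on_interval[OF J(2) dA that \<sigma>0] A0 by simp
  have B1: "B \<sigma> = 0" if "\<sigma> \<in> J" for \<sigma> using const_on_interval[OF J(2) dB that \<sigma>0] B0 by simp
  have cc: "cos (\<alpha> \<sigma>) = c \<sigma>" if s: "\<sigma> \<in> J" for \<sigma>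
  proof -
    have "c \<sigma> = A \<sigma> * cos (\<alpha> \<sigma>) - B \<sigma> * sin (\<alpha> \<sigma>)"
      using sin_cos_squared_add[of "\<alpha> \<sigma>"] unfolding A_def B_def power2_eq_square by algebra
    then show ?thesis using A1[OF s] B1[OF s] by simp
  qed
  have ss: "sin (\<alpha> \<sigma>) = w \<sigma>" if s: "\<sigma> \<in> J" for \<sigma>
  proof -
    have "w \<sigma> = A \<sigma> * sin (\<alpha> \<sigma>) + B \<sigma> * cos (\<alpha> \<sigma>)"
      using sin_cos_squared_add[of "\<alpha> \<sigma>"] unfolding A_def B_def power2_eq_square by algebra
    then show ?thesis using A1[OF s] B1[OF s] by simp
  qed
  show ?thesis using that[of \<alpha>] d\<alpha> cc ss unfolding h_def by blast
qed



lemma rot_eq: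
  "rot_surface X Y (\<sigma>, t) =
    (of_real (cos (Y \<sigma>) * cos (X \<sigma>)) + \<i> * of_real (sin (Y \<sigma>) * cos (X \<sigma>)),
     of_real (cos t * sin (X \<sigma>)) + \<i> * of_real (sin t * sin (X \<sigma>)))"
  unfolding rot_surface_def by (simp add: cis_conv_exp[symmetric] complex_eq_iff)

lemma ds_rot:
  assumes "(X has_real_derivative X1) (at s)" "(Y has_real_derivative Y1) (at s)"
  shows "d_s (rot_surface X Y) (s,t) =
    (of_real (- sin (Y s) * Y1 * cos (X s) - cos (Y s) * sin (X s) * X1)
       + \<i> * of_real (cos (Y s) * Y1 * cos (X s) - sin (Y s) * sin (X s) * X1),
     of_real (cos t * cos (X s) * X1) + \<i> * of_real (sin t * cos (X s) * X1))"
  unfolding d_s_def fst_conv snd_conv rot_eq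
  by (rule vector_derivative_at) (use assms in \<open>auto intro!: derivative_eq_intros simp: algebra_simps\<close>)

lemma dt_rot:
  shows "d_t (rot_surface X Y) (s,t) =
    (0, of_real (- sin t * sin (X s)) + \<i> * of_real (cos t * sin (X s)))"
  unfolding d_t_def fst_conv snd_conv rot_eq
  by (rule vector_derivative_at) (auto intro!: derivative_eq_intros simp: algebra_simps)


lemma E_rot:
  assumes "(X has_real_derivative X1) (at s)" "(Y has_real_derivative Y1) (at s)"
  shows "fff_E \<tau> (rot_surface X Y) (s,t) =
     X1^2 + Y1^2 * (cos (X s))^2 * (1 - (1 - \<tau>^2) * (cos (X s))^2)"
  unfolding fff_E_def berger_metric_def berger_V_def ds_rot[OF assms] rot_eq fst_conv snd_conv
  apply (simp add: inner_complex_def)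
  using sin_cos_squared_add[of "Y s"] sin_cos_squared_add[of t] sin_cos_squared_add[of "X s"] by algebra

lemma F_rot:
  assumes "(X has_real_derivative X1) (at s)" "(Y has_real_derivative Y1) (at s)"
  shows "fff_F \<tau> (rot_surface X Y) (s,t) = - (1 - \<tau>^2) * Y1 * (cos (X s))^2 * (sin (X s))^2"
  unfolding fff_F_def berger_metric_def berger_V_def ds_rot[OF assms] dt_rot rot_eq fst_conv snd_conv
  apply (simp add: inner_complex_def)
  using sin_cos_squared_add[of "Y s"] sin_cos_squared_add[of t] sin_cos_squared_add[of "X s"] by algebra

lemma G_rot:
  shows "fff_G \<tau> (rot_surface X Y) (s,t) = (sin (X s))^2 * (1 - (1 - \<tau>^2) * (sin (X s))^2)"
  unfolding fff_G_def berger_metric_def berger_V_def dt_rot rot_eq fst_conv snd_conv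
  apply (simp add: inner_complex_def)
  using sin_cos_squared_add[of "Y s"] sin_cos_squared_add[of t] sin_cos_squared_add[of "X s"] by algebra


lemma vd_local:
  fixes h k :: "real \<Rightarrow> real"
  assumes "open S" "x \<in> S" "\<And>u. u \<in> S \<Longrightarrow> h u = k u" "(k has_real_derivative k') (at x)"
  shows "vector_derivative h (at x) = k'"
proof (rule vector_derivative_at)
  have "(k has_vector_derivative k') (at x)"
    using assms(4) by (simp add: has_real_derivative_iff_has_vector_derivative)
  then show "(h has_vector_derivative k') (at x)"
    by (rule has_vector_derivative_transform_within_open[OF _ assms(1,2)]) (simp add: assms(3))
qed

lemma vd_const:
  fixes h :: "real \<Rightarrow> real"
  assumes "\<And>u. h u = c"
  shows "vector_derivative h (at x) = 0"
  by (rule vd_local[of UNIV x h "\<lambda>_. c"]) (auto simp: assms)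

lemma brioschi_eval:
  fixes X Y X1 Y1 X2 e f g g1 e' f' :: "real \<Rightarrow> real"
  assumes J: "open J" "\<sigma> \<in> J"
   and dX: "\<And>s. s \<in> J \<Longrightarrow> (X has_real_derivative X1 s) (at s)"
   and dY: "\<And>s. s \<in> J \<Longrightarrow> (Y has_real_derivative Y1 s) (at s)"
   and dX1: "\<And>s. s \<in> J \<Longrightarrow> (X1 has_real_derivative X2 s) (at s)"
   and e_def: "e = (\<lambda>s. X1 s^2 + Y1 s^2 * (cos (X s))^2 * (1 - (1 - \<tau>^2) * (cos (X s))^2))"
   and f_def: "f = (\<lambda>s. - (1 - \<tau>^2) * Y1 s * (cos (X s))^2 * (sin (X s))^2)"
   and g_def: "g = (\<lambda>s. (sin (X s))^2 * (1 - (1 - \<tau>^2) * (sin (X s))^2))"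
   and g1_def: "g1 = (\<lambda>s. 2 * sin (X s) * cos (X s) * X1 s * (1 - 2 * (1 - \<tau>^2) * (sin (X s))^2))"
   and de: "\<And>s. s \<in> J \<Longrightarrow> (e has_real_derivative e' s) (at s)"
   and df: "\<And>s. s \<in> J \<Longrightarrow> (f has_real_derivative f' s) (at s)"
   and dg1: "(g1 has_real_derivative g2) (at \<sigma>)"
  shows "rot_gauss_curvature \<tau> X Y (\<sigma>, t) =
     (- g2 / 2 * (e \<sigma> * g \<sigma> - (f \<sigma>)^2) + e' \<sigma> * g1 \<sigma> * g \<sigma> / 4 - f' \<sigma> * g1 \<sigma> * f \<sigma> / 2
       + e \<sigma> * (g1 \<sigma>)^2 / 4) / (e \<sigma> * g \<sigma> - (f \<sigma>)^2)^2"
proof -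
  define \<Phi> where "\<Phi> = rot_surface X Y"
  define E where "E = fff_E \<tau> \<Phi>"
  define F where "F = fff_F \<tau> \<Phi>"
  define G where "G = fff_G \<tau> \<Phi>"
  have Ee: "E (s, u) = e s" if "s \<in> J" for s u
    unfolding E_def \<Phi>_def e_def using E_rot[OF dX[OF that] dY[OF that]] by simp
  have Ff: "F (s, u) = f s" if "s \<in> J" for s u
    unfolding F_def \<Phi>_def f_def using F_rot[OF dX[OF that] dY[OF that]] by simp
  have Gg: "G (s, u) = g s" for s u
    unfolding G_def \<Phi>_def g_def using G_rot by simp
  have dg: "(g has_real_derivative g1 s) (at s)" if s: "s \<in> J" for s
    unfolding g_def g1_def using dX[OF s]
    by (auto intro!: derivative_eq_intros simp: algebra_simps power2_eq_square)
  have dsE: "d_s E (\<sigma>, t) = e' \<sigma>"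
    unfolding d_s_def fst_conv snd_conv by (rule vd_local[OF J]) (auto simp: Ee de J)
  have dtE: "d_t E (s, u) = 0" if "s \<in> J" for s u
    unfolding d_t_def fst_conv snd_conv by (rule vd_const) (simp add: Ee that)
  have dttE: "d_t (d_t E) (\<sigma>, t) = 0"
    unfolding d_t_def[of "d_t E"] fst_conv snd_conv by (rule vd_const) (simp add: dtE J)
  have dsF: "d_s F (\<sigma>, t) = f' \<sigma>"
    unfolding d_s_def fst_conv snd_conv by (rule vd_local[OF J]) (auto simp: Ff df J)
  have dtF: "d_t F (s, u) = 0" if "s \<in> J" for s u
    unfolding d_t_def fst_conv snd_conv by (rule vd_const) (simp add: Ff that)
  have dstF: "d_s (d_t F) (\<sigma>, t) = 0"
    unfolding d_s_def[of "d_t F"] fst_conv snd_conv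
    by (rule vd_local[OF J, of _ "\<lambda>_. 0"]) (auto simp: dtF)
  have dsG: "d_s G (s, u) = g1 s" if "s \<in> J" for s u
    unfolding d_s_def fst_conv snd_conv by (rule vd_local[OF J(1) that]) (auto simp: Gg dg that)
  have dssG: "d_s (d_s G) (\<sigma>, t) = g2"
    unfolding d_s_def[of "d_s G"] fst_conv snd_conv
    by (rule vd_local[OF J, of _ g1]) (auto simp: dsG dg1)
  have dtG: "d_t G (s, u) = 0" for s u
    unfolding d_t_def fst_conv snd_conv by (rule vd_const) (simp add: Gg)
  show ?thesis
    unfolding rot_gauss_curvature_def brioschi_K_def
    unfolding \<Phi>_def[symmetric] E_def[symmetric] F_def[symmetric] G_def[symmetric]
    unfolding dsE dttE dsF dtF[OF J(2)] dstF dsG[OF J(2)] dssG dtG dtE[OF J(2)] Ee[OF J(2)] Ff[OF J(2)] Gg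
    by (simp add: det3_def field_simps power2_eq_square)
qed



lemma d_Pf: "((\<lambda>x. 1 - lam * (sin x)\<^sup>2) has_real_derivative -2 * lam * sin x * cos x) (at x)"
  by (auto intro!: derivative_eq_intros simp: power2_eq_square algebra_simps)

lemma d_C2: "((\<lambda>x. (cos x)\<^sup>2) has_real_derivative -2 * sin x * cos x) (at x)"
  by (auto intro!: derivative_eq_intros simp: power2_eq_square algebra_simps)

lemma d_S2: "((\<lambda>x. (sin x)\<^sup>2) has_real_derivative 2 * sin x * cos x) (at x)"
  by (auto intro!: derivative_eq_intros simp: power2_eq_square algebra_simps)

lemma d_Qf: "((\<lambda>x. 1 - 2 * lam * (sin x)\<^sup>2) has_real_derivative -4 * lam * sin x * cos x) (at x)"
  by (auto intro!: derivative_eq_intros simp: power2_eq_square algebra_simps)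

lemma en_alg:
  fixes S C lam K ca z p q :: real
  assumes sc: "S^2 + C^2 = 1" and p: "p = 1 - lam * S^2" and q: "q = 1 - 2 * lam * S^2"
    and p0: "p \<noteq> 0" and q0: "q \<noteq> 0" and C0: "C \<noteq> 0"
    and z: "z = (S / C) * (p / q * K - ca^2 * ((1 - lam) / p + 4 * lam * C^2 / q))"
  shows "((((-4 * lam * S * C) * q + q * (-4 * lam * S * C)) * C^2 + q * q * (-2 * S * C)) * p
           - q * q * C^2 * (-2 * lam * S * C)) / (p * p) * ca * ca^2
         + q * q * C^2 / p * (2 * ca * (- z))
         + K * ((-2 * lam * S * C) * S^2 + p * (2 * S * C)) * ca = 0"
proof -
  have "((((-4 * lam * S * C) * q + q * (-4 * lam * S * C)) * C^2 + q * q * (-2 * S * C)) * p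
           - q * q * C^2 * (-2 * lam * S * C)) / (p * p) * ca * ca^2
         + q * q * C^2 / p * (2 * ca * (- z))
         + K * ((-2 * lam * S * C) * S^2 + p * (2 * S * C)) * ca
       = ca * S * C * ((((-8 * lam) * q * C^2 + q * q * (-2)) * p + 2 * lam * q * q * C^2) / (p * p) * ca^2
           - 2 * q * q / p * (p / q * K - ca^2 * ((1 - lam) / p + 4 * lam * C^2 / q))
           + K * (-2 * lam * S^2 + 2 * p))"
    unfolding z using C0 p0 q0 by (simp add: field_simps power2_eq_square)
  also have "... = 0"
  proof -
    have "(((-8 * lam) * q * C^2 + q * q * (-2)) * p + 2 * lam * q * q * C^2) / (p * p) * ca^2
           - 2 * q * q / p * (p / q * K - ca^2 * ((1 - lam) / p + 4 * lam * C^2 / q))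
           + K * (-2 * lam * S^2 + 2 * p)
         = ca^2 * q * ((-8 * lam * C^2 - 2 * q) * p + 2 * lam * q * C^2 + 2 * (1 - lam) * q + 8 * lam * C^2 * p) / (p * p)
           + K * (-2 * q - 2 * lam * S^2 + 2 * p)"
      using p0 q0 by (simp add: field_simps power2_eq_square)
    also have "... = 0"
    proof -
      have "(-8 * lam * C^2 - 2 * q) * p + 2 * lam * q * C^2 + 2 * (1 - lam) * q + 8 * lam * C^2 * p = 0"
        unfolding p q using sc by algebra
      moreover have "-2 * q - 2 * lam * S^2 + 2 * p = 0" unfolding p q by simp
      ultimately show ?thesis by simp
    qed
    finally show ?thesis by simp
  qed
  finally show ?thesis .
qed

lemma en_alg2:
  fixes S C lam K ca sa d p q :: real
  assumes sc: "S^2 + C^2 = 1" and p: "p = 1 - lam * S^2" and q: "q = 1 - 2 * lam * S^2"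
    and p0: "p \<noteq> 0" and q0: "q \<noteq> 0" and C0: "C \<noteq> 0"
    and z: "d * sa = (S / C) * (p / q * K - ca^2 * ((1 - lam) / p + 4 * lam * C^2 / q))"
  shows "(((((-4 * lam * S * C) * ca) * q + ((-4 * lam * S * C) * ca) * q) * C^2 + ((-2 * S * C) * ca) * (q * q)) * p
           - q * q * C^2 * ((-2 * lam * S * C) * ca)) / (p * p) * ca^2
         + ((-2 * sa * ca) * d) * (q * q * C^2 / p)
         + K * (((-2 * lam * S * C) * ca) * S^2 + ((2 * S * C) * ca) * p) = 0"
proof -
  have "(((((-4 * lam * S * C) * ca) * q + ((-4 * lam * S * C) * ca) * q) * C^2 + ((-2 * S * C) * ca) * (q * q)) * p
           - q * q * C^2 * ((-2 * lam * S * C) * ca)) / (p * p) * ca^2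
         + ((-2 * sa * ca) * d) * (q * q * C^2 / p)
         + K * (((-2 * lam * S * C) * ca) * S^2 + ((2 * S * C) * ca) * p) =
        ((((-4 * lam * S * C) * q + q * (-4 * lam * S * C)) * C^2 + q * q * (-2 * S * C)) * p
           - q * q * C^2 * (-2 * lam * S * C)) / (p * p) * ca * ca^2
         + q * q * C^2 / p * (2 * ca * (- (d * sa)))
         + K * ((-2 * lam * S * C) * S^2 + p * (2 * S * C)) * ca"
    using p0 by (simp add: field_simps)
  also have "... = 0"
    by (rule en_alg[OF sc p q p0 q0 C0 z])
  finally show ?thesis .
qed


lemma energy:
  fixes \<tau> lam K :: real and J :: "real set" and u \<alpha> :: "real \<Rightarrow> real"
  assumes tau: "\<tau> > 0" "lam = 1 - \<tau>\<^sup>2" and J: "is_interval J"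
   and du: "\<And>s. s \<in> J \<Longrightarrow> u differentiable (at s)"
   and da: "\<And>s. s \<in> J \<Longrightarrow> \<alpha> differentiable (at s)"
   and C0: "\<And>s. s \<in> J \<Longrightarrow> cos (u s) \<noteq> 0"
   and Q0: "\<And>s. s \<in> J \<Longrightarrow> 1 - 2 * lam * (sin (u s))\<^sup>2 \<noteq> 0"
   and eu: "\<And>s. s \<in> J \<Longrightarrow> deriv u s = cos (\<alpha> s)"
   and ea: "\<And>s. s \<in> J \<Longrightarrow> deriv \<alpha> s * sin (\<alpha> s) =
               tan (u s) *
                 ((1 - lam * (sin (u s))\<^sup>2) / (1 - 2 * lam * (sin (u s))\<^sup>2) * K
                  - (cos (\<alpha> s))\<^sup>2 * ((1 - lam) / (1 - lam * (sin (u s))\<^sup>2)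
                     + 4 * lam * (cos (u s))\<^sup>2 / (1 - 2 * lam * (sin (u s))\<^sup>2)))"
  shows "\<exists>c. \<forall>s\<in>J.
              (1 - 2 * lam * (sin (u s))\<^sup>2)\<^sup>2 / (1 - lam * (sin (u s))\<^sup>2) * (cos (u s))\<^sup>2 * (cos (\<alpha> s))\<^sup>2
              + K * (1 - lam * (sin (u s))\<^sup>2) * (sin (u s))\<^sup>2 = c"
proof -
  define Qf where "Qf = (\<lambda>x::real. 1 - 2 * lam * (sin x)\<^sup>2)"
  define Pf where "Pf = (\<lambda>x::real. 1 - lam * (sin x)\<^sup>2)"
  define C2 where "C2 = (\<lambda>x::real. (cos x)\<^sup>2)"
  define S2 where "S2 = (\<lambda>x::real. (sin x)\<^sup>2)"
  define G where "G = (\<lambda>s. Qf (u s) * Qf (u s) * C2 (u s) / Pf (u s) * C2 (\<alpha> s) + K * (Pf (u s) * S2 (u s)))"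
  have Ppos: "Pf x > 0" for x unfolding Pf_def using P_pos[OF tau] .
  have dG: "(G has_real_derivative 0) (at s)" if s: "s \<in> J" for s
  proof -
    have hu: "(u has_real_derivative cos (\<alpha> s)) (at s)"
      using du[OF s] eu[OF s] DERIV_deriv_iff_real_differentiable by metis
    have ha: "(\<alpha> has_real_derivative deriv \<alpha> s) (at s)"
      using da[OF s] DERIV_deriv_iff_real_differentiable by metis
    let ?S = "sin (u s)" and ?C = "cos (u s)" and ?ca = "cos (\<alpha> s)" and ?sa = "sin (\<alpha> s)"
    have dQ: "((\<lambda>s. Qf (u s)) has_real_derivative (-4 * lam * ?S * ?C) * ?ca) (at s)"
      unfolding Qf_def by (rule DERIV_chain2[OF d_Qf hu])
    have dP: "((\<lambda>s. Pf (u s)) has_real_derivative (-2 * lam * ?S * ?C) * ?ca) (at s)"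
      unfolding Pf_def by (rule DERIV_chain2[OF d_Pf hu])
    have dC: "((\<lambda>s. C2 (u s)) has_real_derivative (-2 * ?S * ?C) * ?ca) (at s)"
      unfolding C2_def by (rule DERIV_chain2[OF d_C2 hu])
    have dS: "((\<lambda>s. S2 (u s)) has_real_derivative (2 * ?S * ?C) * ?ca) (at s)"
      unfolding S2_def by (rule DERIV_chain2[OF d_S2 hu])
    have dA: "((\<lambda>s. C2 (\<alpha> s)) has_real_derivative (-2 * ?sa * ?ca) * deriv \<alpha> s) (at s)"
      unfolding C2_def by (rule DERIV_chain2[OF d_C2 ha])
    have dQQ: "((\<lambda>s. Qf (u s) * Qf (u s)) has_real_derivative
        (-4 * lam * ?S * ?C) * ?ca * Qf (u s) + (-4 * lam * ?S * ?C) * ?ca * Qf (u s)) (at s)"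
      by (rule DERIV_mult[OF dQ dQ])
    have dQQC: "((\<lambda>s. Qf (u s) * Qf (u s) * C2 (u s)) has_real_derivative
        ((-4 * lam * ?S * ?C) * ?ca * Qf (u s) + (-4 * lam * ?S * ?C) * ?ca * Qf (u s)) * C2 (u s)
         + (-2 * ?S * ?C) * ?ca * (Qf (u s) * Qf (u s))) (at s)"
      by (rule DERIV_mult[OF dQQ dC])
    have dN: "((\<lambda>s. Qf (u s) * Qf (u s) * C2 (u s) / Pf (u s)) has_real_derivative
        ((((-4 * lam * ?S * ?C) * ?ca * Qf (u s) + (-4 * lam * ?S * ?C) * ?ca * Qf (u s)) * C2 (u s)
         + (-2 * ?S * ?C) * ?ca * (Qf (u s) * Qf (u s))) * Pf (u s)
         - Qf (u s) * Qf (u s) * C2 (u s) * ((-2 * lam * ?S * ?C) * ?ca)) / (Pf (u s) * Pf (u s))) (at s)"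
      by (rule DERIV_divide[OF dQQC dP]) (use Ppos in \<open>simp add: less_imp_neq[symmetric]\<close>)
    have dNA: "((\<lambda>s. Qf (u s) * Qf (u s) * C2 (u s) / Pf (u s) * C2 (\<alpha> s)) has_real_derivative
        ((((-4 * lam * ?S * ?C) * ?ca * Qf (u s) + (-4 * lam * ?S * ?C) * ?ca * Qf (u s)) * C2 (u s)
         + (-2 * ?S * ?C) * ?ca * (Qf (u s) * Qf (u s))) * Pf (u s)
         - Qf (u s) * Qf (u s) * C2 (u s) * ((-2 * lam * ?S * ?C) * ?ca)) / (Pf (u s) * Pf (u s)) * C2 (\<alpha> s)
        + (-2 * ?sa * ?ca) * deriv \<alpha> s * (Qf (u s) * Qf (u s) * C2 (u s) / Pf (u s))) (at s)"
      by (rule DERIV_mult[OF dN dA])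
    have dM: "((\<lambda>s. K * (Pf (u s) * S2 (u s))) has_real_derivative
        K * ((-2 * lam * ?S * ?C) * ?ca * S2 (u s) + (2 * ?S * ?C) * ?ca * Pf (u s))) (at s)"
      by (rule DERIV_cmult[OF DERIV_mult[OF dP dS]])
    have dG': "(G has_real_derivative
        ((((-4 * lam * ?S * ?C) * ?ca * Qf (u s) + (-4 * lam * ?S * ?C) * ?ca * Qf (u s)) * C2 (u s)
         + (-2 * ?S * ?C) * ?ca * (Qf (u s) * Qf (u s))) * Pf (u s)
         - Qf (u s) * Qf (u s) * C2 (u s) * ((-2 * lam * ?S * ?C) * ?ca)) / (Pf (u s) * Pf (u s)) * C2 (\<alpha> s)
        + (-2 * ?sa * ?ca) * deriv \<alpha> s * (Qf (u s) * Qf (u s) * C2 (u s) / Pf (u s))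
        + K * ((-2 * lam * ?S * ?C) * ?ca * S2 (u s) + (2 * ?S * ?C) * ?ca * Pf (u s))) (at s)"
      unfolding G_def by (rule DERIV_add[OF dNA dM])
    have z: "deriv \<alpha> s * ?sa = (?S / ?C) * (Pf (u s) / Qf (u s) * K - ?ca^2 * ((1 - lam) / Pf (u s) + 4 * lam * ?C^2 / Qf (u s)))"
      using ea[OF s] unfolding Pf_def Qf_def tan_def by simp
    have "((((-4 * lam * ?S * ?C) * ?ca * Qf (u s) + (-4 * lam * ?S * ?C) * ?ca * Qf (u s)) * C2 (u s)
         + (-2 * ?S * ?C) * ?ca * (Qf (u s) * Qf (u s))) * Pf (u s)
         - Qf (u s) * Qf (u s) * C2 (u s) * ((-2 * lam * ?S * ?C) * ?ca)) / (Pf (u s) * Pf (u s)) * C2 (\<alpha> s)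
        + (-2 * ?sa * ?ca) * deriv \<alpha> s * (Qf (u s) * Qf (u s) * C2 (u s) / Pf (u s))
        + K * ((-2 * lam * ?S * ?C) * ?ca * S2 (u s) + (2 * ?S * ?C) * ?ca * Pf (u s)) = 0"
      unfolding C2_def S2_def
    proof (rule en_alg2[where S="sin (u s)" and C="cos (u s)" and lam=lam and K=K and ca="cos (\<alpha> s)"
          and sa="sin (\<alpha> s)" and d="deriv \<alpha> s" and p="Pf (u s)" and q="Qf (u s)"])
      show "Pf (u s) \<noteq> 0" using Ppos[of "u s"] by simp
      show "Qf (u s) \<noteq> 0" using Q0[OF s] unfolding Qf_def .
      show "cos (u s) \<noteq> 0" by (rule C0[OF s])
      show "deriv \<alpha> s * sin (\<alpha> s) = sin (u s) / cos (u s) *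
        (Pf (u s) / Qf (u s) * K - (cos (\<alpha> s))\<^sup>2 * ((1 - lam) / Pf (u s) + 4 * lam * (cos (u s))\<^sup>2 / Qf (u s)))"
        by (rule z)
    qed (simp_all add: Pf_def Qf_def)
    then show ?thesis using dG' by simp
  qed
  have "convex J" using J is_interval_convex_1 by blast
  then obtain c where c: "\<forall>s\<in>J. G s = c"
    using has_field_derivative_zero_constant[of J G] dG has_field_derivative_at_within by blast
  have "G s = (1 - 2 * lam * (sin (u s))\<^sup>2)\<^sup>2 / (1 - lam * (sin (u s))\<^sup>2) * (cos (u s))\<^sup>2 * (cos (\<alpha> s))\<^sup>2
              + K * (1 - lam * (sin (u s))\<^sup>2) * (sin (u s))\<^sup>2" for s
    unfolding G_def Qf_def Pf_def C2_def S2_def by (simp add: power2_eq_square)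
  then show ?thesis using c by auto
qed



lemma alg_final:
  fixes S C lam p p2 K :: real
  assumes sc: "S^2 + C^2 = 1" and P0: "1 - lam * S^2 \<noteq> 0" and Q0: "1 - 2 * lam * S^2 \<noteq> 0"
    and S0: "S \<noteq> 0" and C0: "C \<noteq> 0"
    and K: "K = ((2 * S * C * p * (1 - 2 * lam * S^2))^2 / 4
       - (S^2 * (1 - lam * S^2)) * (2 * p^2 * ((C^2 - S^2) * (1 - 2 * lam * S^2) - 4 * lam * S^2 * C^2)
           + 2 * S * C * (1 - 2 * lam * S^2) * p2) / 2) / (S^2 * (1 - lam * S^2))^2"
  shows "- p2 = (S / C) * ((1 - lam * S^2) / (1 - 2 * lam * S^2) * K
      - p^2 * ((1 - lam) / (1 - lam * S^2) + 4 * lam * C^2 / (1 - 2 * lam * S^2)))"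
proof -
  define P where "P = 1 - lam * S^2"
  define Q where "Q = 1 - 2 * lam * S^2"
  have P0': "P \<noteq> 0" and Q0': "Q \<noteq> 0" using P0 Q0 P_def Q_def by auto
  have K': "K = (C^2 * Q^2 * p^2 - P * (p^2 * ((C^2 - S^2) * Q - 4 * lam * S^2 * C^2) + S * C * Q * p2)) / (S^2 * P^2)"
    unfolding K P_def[symmetric] Q_def[symmetric] using S0 P0'
    by (simp add: field_simps power2_eq_square)
  have key: "C^2 * Q^2 - P * ((C^2 - S^2) * Q - 4 * lam * S^2 * C^2) = S^2 * ((1 - lam) * Q + 4 * lam * C^2 * P)"
    unfolding P_def Q_def using sc by algebra
  have "(S / C) * (P / Q * K - p^2 * ((1 - lam) / P + 4 * lam * C^2 / Q))
      = (S / C) * (p^2 * (C^2 * Q^2 - P * ((C^2 - S^2) * Q - 4 * lam * S^2 * C^2)) / (S^2 * P * Q)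
          - S * C * p2 / S^2 - p^2 * ((1 - lam) / P + 4 * lam * C^2 / Q))"
    unfolding K' using S0 P0' Q0' C0 by (simp add: field_simps power2_eq_square)
  also have "... = - p2"
    unfolding key using S0 P0' Q0' C0 by (simp add: field_simps power2_eq_square)
  finally show ?thesis unfolding P_def Q_def by simp
qed



theorem lemma3p1:
  fixes \<tau> lam :: real and I :: "real set" and x y :: "real \<Rightarrow> real"
  assumes tau_pos: "\<tau> > 0"
    and lam_def: "lam = 1 - \<tau>\<^sup>2"
    and I_open: "open I" and I_interval: "is_interval I" and I_ne: "I \<noteq> {}"
    and x_smooth: "smooth_on I x" and y_smooth: "smooth_on I y"
    and sin_pos: "\<forall>s\<in>I. sin (x s) > 0"
    and cos_nz: "\<forall>s\<in>I. cos (x s) \<noteq> 0"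
    and den_nz: "\<forall>s\<in>I. 1 - 2 * lam * (sin (x s))\<^sup>2 \<noteq> 0"
    and regular: "\<forall>s\<in>I. (deriv x s, deriv y s) \<noteq> (0, 0)"
  shows
    "(\<exists>J \<phi>. open J \<and> is_interval J \<and> bij_betw \<phi> J I \<and> smooth_on J \<phi> \<and>
        (\<forall>\<sigma>\<in>J. deriv \<phi> \<sigma> \<noteq> 0) \<and>
        (\<exists>\<alpha> :: real \<Rightarrow> real. \<forall>\<sigma>\<in>J.
            \<alpha> differentiable (at \<sigma>) \<and>
            deriv (x \<circ> \<phi>) \<sigma> = cos (\<alpha> \<sigma>) \<and>
            deriv (y \<circ> \<phi>) \<sigma> = (1 / \<tau>) * (sqrt (1 - lam * (sin (x (\<phi> \<sigma>)))\<^sup>2) / cos (x (\<phi> \<sigma>))) * sin (\<alpha> \<sigma>) \<and>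
            (\<forall>t. deriv \<alpha> \<sigma> * sin (\<alpha> \<sigma>) =
               tan (x (\<phi> \<sigma>)) *
                 ((1 - lam * (sin (x (\<phi> \<sigma>)))\<^sup>2) / (1 - 2 * lam * (sin (x (\<phi> \<sigma>)))\<^sup>2)
                     * rot_gauss_curvature \<tau> (x \<circ> \<phi>) (y \<circ> \<phi>) (\<sigma>, t)
                  - (cos (\<alpha> \<sigma>))\<^sup>2 * ((1 - lam) / (1 - lam * (sin (x (\<phi> \<sigma>)))\<^sup>2)
                     + 4 * lam * (cos (x (\<phi> \<sigma>)))\<^sup>2 / (1 - 2 * lam * (sin (x (\<phi> \<sigma>)))\<^sup>2))))))
     \<and>
     (\<forall>(K :: real) (J :: real set) (u :: real \<Rightarrow> real) (v :: real \<Rightarrow> real) (\<alpha> :: real \<Rightarrow> real).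
        open J \<and> is_interval J \<and>
        (\<forall>s\<in>J. u differentiable (at s) \<and> v differentiable (at s) \<and> \<alpha> differentiable (at s) \<and>
            cos (u s) \<noteq> 0 \<and> 1 - 2 * lam * (sin (u s))\<^sup>2 \<noteq> 0 \<and>
            deriv u s = cos (\<alpha> s) \<and>
            deriv v s = (1 / \<tau>) * (sqrt (1 - lam * (sin (u s))\<^sup>2) / cos (u s)) * sin (\<alpha> s) \<and>
            deriv \<alpha> s * sin (\<alpha> s) =
               tan (u s) *
                 ((1 - lam * (sin (u s))\<^sup>2) / (1 - 2 * lam * (sin (u s))\<^sup>2) * K
                  - (cos (\<alpha> s))\<^sup>2 * ((1 - lam) / (1 - lam * (sin (u s))\<^sup>2)
                     + 4 * lam * (cos (u s))\<^sup>2 / (1 - 2 * lam * (sin (u s))\<^sup>2))))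
        \<longrightarrow> (\<exists>c. \<forall>s\<in>J.
              (1 - 2 * lam * (sin (u s))\<^sup>2)\<^sup>2 / (1 - lam * (sin (u s))\<^sup>2) * (cos (u s))\<^sup>2 * (cos (\<alpha> s))\<^sup>2
              + K * (1 - lam * (sin (u s))\<^sup>2) * (sin (u s))\<^sup>2 = c))"
proof -
  have part2: "\<forall>(K :: real) (J :: real set) (u :: real \<Rightarrow> real) (v :: real \<Rightarrow> real) (\<alpha> :: real \<Rightarrow> real).
        open J \<and> is_interval J \<and>
        (\<forall>s\<in>J. u differentiable (at s) \<and> v differentiable (at s) \<and> \<alpha> differentiable (at s) \<and>
            cos (u s) \<noteq> 0 \<and> 1 - 2 * lam * (sin (u s))\<^sup>2 \<noteq> 0 \<and>
            deriv u s = cos (\<alpha> s) \<and>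
            deriv v s = (1 / \<tau>) * (sqrt (1 - lam * (sin (u s))\<^sup>2) / cos (u s)) * sin (\<alpha> s) \<and>
            deriv \<alpha> s * sin (\<alpha> s) =
               tan (u s) *
                 ((1 - lam * (sin (u s))\<^sup>2) / (1 - 2 * lam * (sin (u s))\<^sup>2) * K
                  - (cos (\<alpha> s))\<^sup>2 * ((1 - lam) / (1 - lam * (sin (u s))\<^sup>2)
                     + 4 * lam * (cos (u s))\<^sup>2 / (1 - 2 * lam * (sin (u s))\<^sup>2))))
        \<longrightarrow> (\<exists>c. \<forall>s\<in>J.
              (1 - 2 * lam * (sin (u s))\<^sup>2)\<^sup>2 / (1 - lam * (sin (u s))\<^sup>2) * (cos (u s))\<^sup>2 * (cos (\<alpha> s))\<^sup>2
              + K * (1 - lam * (sin (u s))\<^sup>2) * (sin (u s))\<^sup>2 = c)"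
  proof (intro allI impI)
    fix K :: real and J :: "real set" and u v \<alpha> :: "real \<Rightarrow> real"
    assume H: "open J \<and> is_interval J \<and>
        (\<forall>s\<in>J. u differentiable (at s) \<and> v differentiable (at s) \<and> \<alpha> differentiable (at s) \<and>
            cos (u s) \<noteq> 0 \<and> 1 - 2 * lam * (sin (u s))\<^sup>2 \<noteq> 0 \<and>
            deriv u s = cos (\<alpha> s) \<and>
            deriv v s = (1 / \<tau>) * (sqrt (1 - lam * (sin (u s))\<^sup>2) / cos (u s)) * sin (\<alpha> s) \<and>
            deriv \<alpha> s * sin (\<alpha> s) =
               tan (u s) *
                 ((1 - lam * (sin (u s))\<^sup>2) / (1 - 2 * lam * (sin (u s))\<^sup>2) * K
                  - (cos (\<alpha> s))\<^sup>2 * ((1 - lam) / (1 - lam * (sin (u s))\<^sup>2)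
                     + 4 * lam * (cos (u s))\<^sup>2 / (1 - 2 * lam * (sin (u s))\<^sup>2))))"
    show "\<exists>c. \<forall>s\<in>J.
              (1 - 2 * lam * (sin (u s))\<^sup>2)\<^sup>2 / (1 - lam * (sin (u s))\<^sup>2) * (cos (u s))\<^sup>2 * (cos (\<alpha> s))\<^sup>2
              + K * (1 - lam * (sin (u s))\<^sup>2) * (sin (u s))\<^sup>2 = c"
    proof (rule energy[OF tau_pos lam_def])
      show "is_interval J" using H by blast
      show "\<And>s. s \<in> J \<Longrightarrow> u differentiable (at s)" using H by blast
      show "\<And>s. s \<in> J \<Longrightarrow> \<alpha> differentiable (at s)" using H by blast
      show "\<And>s. s \<in> J \<Longrightarrow> cos (u s) \<noteq> 0" using H by blast
      show "\<And>s. s \<in> J \<Longrightarrow> 1 - 2 * lam * (sin (u s))\<^sup>2 \<noteq> 0" using H by blast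
      show "\<And>s. s \<in> J \<Longrightarrow> deriv u s = cos (\<alpha> s)" using H by blast
      show "\<And>s. s \<in> J \<Longrightarrow> deriv \<alpha> s * sin (\<alpha> s) =
               tan (u s) *
                 ((1 - lam * (sin (u s))\<^sup>2) / (1 - 2 * lam * (sin (u s))\<^sup>2) * K
                  - (cos (\<alpha> s))\<^sup>2 * ((1 - lam) / (1 - lam * (sin (u s))\<^sup>2)
                     + 4 * lam * (cos (u s))\<^sup>2 / (1 - 2 * lam * (sin (u s))\<^sup>2)))" using H by blast
    qed
  qed
  have part1: "(\<exists>J \<phi>. open J \<and> is_interval J \<and> bij_betw \<phi> J I \<and> smooth_on J \<phi> \<and>
        (\<forall>\<sigma>\<in>J. deriv \<phi> \<sigma> \<noteq> 0) \<and>
        (\<exists>\<alpha> :: real \<Rightarrow> real. \<forall>\<sigma>\<in>J.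
            \<alpha> differentiable (at \<sigma>) \<and>
            deriv (x \<circ> \<phi>) \<sigma> = cos (\<alpha> \<sigma>) \<and>
            deriv (y \<circ> \<phi>) \<sigma> = (1 / \<tau>) * (sqrt (1 - lam * (sin (x (\<phi> \<sigma>)))\<^sup>2) / cos (x (\<phi> \<sigma>))) * sin (\<alpha> \<sigma>) \<and>
            (\<forall>t. deriv \<alpha> \<sigma> * sin (\<alpha> \<sigma>) =
               tan (x (\<phi> \<sigma>)) *
                 ((1 - lam * (sin (x (\<phi> \<sigma>)))\<^sup>2) / (1 - 2 * lam * (sin (x (\<phi> \<sigma>)))\<^sup>2)
                     * rot_gauss_curvature \<tau> (x \<circ> \<phi>) (y \<circ> \<phi>) (\<sigma>, t)
                  - (cos (\<alpha> \<sigma>))\<^sup>2 * ((1 - lam) / (1 - lam * (sin (x (\<phi> \<sigma>)))\<^sup>2)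
                     + 4 * lam * (cos (x (\<phi> \<sigma>)))\<^sup>2 / (1 - 2 * lam * (sin (x (\<phi> \<sigma>)))\<^sup>2))))))"
  proof -
    have Cx: "Cn I n x" for n using smooth_imp_Cn[OF I_open x_smooth] .
    have Cy: "Cn I n y" for n using smooth_imp_Cn[OF I_open y_smooth] .
    define x1 where "x1 = deriv x"
    define y1 where "y1 = deriv y"
    have Cx1: "Cn I n x1" for n using Cx[of "Suc n"] by (simp add: x1_def)
    have Cy1: "Cn I n y1" for n using Cy[of "Suc n"] by (simp add: y1_def)
    have dx: "(x has_real_derivative x1 s) (at s)" if "s \<in> I" for s
      unfolding x1_def by (rule Cn_diff[OF Cx that])
    have dy: "(y has_real_derivative y1 s) (at s)" if "s \<in> I" for s
      unfolding y1_def by (rule Cn_diff[OF Cy that])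
    have Csin: "Cn UNIV n sin" for n using Cn_sin_cos by blast
    have Ccos: "Cn UNIV n cos" for n using Cn_sin_cos by blast
    have Csx: "Cn I n (\<lambda>s. sin (x s))" for n by (rule Cn_comp[OF I_open open_UNIV _ Csin Cx]) simp
    have Ccx: "Cn I n (\<lambda>s. cos (x s))" for n by (rule Cn_comp[OF I_open open_UNIV _ Ccos Cx]) simp
    define Pf where "Pf = (\<lambda>s. 1 - lam * (sin (x s))\<^sup>2)"
    have Ppos: "Pf s > 0" for s unfolding Pf_def by (rule P_pos[OF tau_pos lam_def])
    have CPf: "Cn I n Pf" for n unfolding Pf_def
      by (rule Cn_sub[OF I_open Cn_const Cn_mult[OF I_open Cn_const Cn_pow2[OF I_open Csx]]])
    define R where "R = (\<lambda>s. (x1 s)\<^sup>2 + \<tau>\<^sup>2 * (y1 s)\<^sup>2 * (cos (x s))\<^sup>2 / Pf s)"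
    have CR: "Cn I n R" for n unfolding R_def
      by (rule Cn_add[OF I_open Cn_pow2[OF I_open Cx1] Cn_divide[OF I_open Cn_mult[OF I_open
          Cn_mult[OF I_open Cn_const Cn_pow2[OF I_open Cy1]] Cn_pow2[OF I_open Ccx]] CPf]])
         (use Ppos in \<open>simp add: less_imp_neq[symmetric]\<close>)
    have Rpos: "R s > 0" if s: "s \<in> I" for s
    proof -
      have c0: "(cos (x s))\<^sup>2 > 0" using cos_nz s by simp
      have t0: "\<tau>\<^sup>2 > 0" using tau_pos by simp
      have nn: "\<tau>\<^sup>2 * (y1 s)\<^sup>2 * (cos (x s))\<^sup>2 / Pf s \<ge> 0"
        using Ppos[of s] by (simp add: t0 less_imp_le)
      show ?thesis
      proof (cases "x1 s = 0")
        case True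
        then have "y1 s \<noteq> 0" using regular s unfolding x1_def y1_def by auto
        then have "\<tau>\<^sup>2 * (y1 s)\<^sup>2 * (cos (x s))\<^sup>2 / Pf s > 0"
          using c0 t0 Ppos[of s] by simp
        then show ?thesis unfolding R_def by (simp add: True)
      next
        case False
        then have "(x1 s)\<^sup>2 > 0" by simp
        then show ?thesis unfolding R_def using nn by linarith
      qed
    qed
    define L where "L = (\<lambda>s. sqrt (R s))"
    have CL: "Cn I n L" for n unfolding L_def
      by (rule Cn_comp[OF I_open open_greaterThan _ Cn_sqrt CR]) (use Rpos in simp)
    have Lpos: "L s > 0" if "s \<in> I" for s unfolding L_def using Rpos[OF that] by simp
    have L2: "(L s)\<^sup>2 = R s" if "s \<in> I" for s unfolding L_def using Rpos[OF that] by simp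
    have Lpos': "\<And>s. s \<in> I \<Longrightarrow> L s > 0" by (rule Lpos)
    have ex: "\<exists>J \<phi>. open J \<and> is_interval J \<and> bij_betw \<phi> J I \<and> (\<forall>n. Cn J n \<phi>) \<and>
        (\<forall>\<sigma>\<in>J. (\<phi> has_real_derivative inverse (L (\<phi> \<sigma>))) (at \<sigma>))"
    proof (rule reparam[OF I_open I_interval I_ne CL Lpos'])
      fix J \<phi> assume "open J" "is_interval J" "bij_betw \<phi> J I" "\<And>n. Cn J n \<phi>"
        "\<And>\<sigma>. \<sigma> \<in> J \<Longrightarrow> (\<phi> has_real_derivative inverse (L (\<phi> \<sigma>))) (at \<sigma>)"
      then show ?thesis by blast
    qed
    then obtain J \<phi> where openJ: "open J" and intJ: "is_interval J" and bij: "bij_betw \<phi> J I"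
      and C\<phi>0: "\<forall>n. Cn J n \<phi>"
      and d\<phi>0: "\<forall>\<sigma>\<in>J. (\<phi> has_real_derivative inverse (L (\<phi> \<sigma>))) (at \<sigma>)"
      by blast
    have C\<phi>: "Cn J n \<phi>" for n using C\<phi>0 by blast
    have d\<phi>: "(\<phi> has_real_derivative inverse (L (\<phi> \<sigma>))) (at \<sigma>)" if "\<sigma> \<in> J" for \<sigma>
      using d\<phi>0 that by blast
    have \<phi>I: "\<phi> \<sigma> \<in> I" if "\<sigma> \<in> J" for \<sigma> by (rule bij_betw_apply[OF bij that])
    have Jne: "J \<noteq> {}"
    proof
      assume "J = {}"
      then have "I = {}" using bij_betw_imp_surj_on[OF bij] by simp
      then show False using I_ne by simp
    qed
    define X where "X = (\<lambda>\<sigma>. x (\<phi> \<sigma>))"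
    define Y where "Y = (\<lambda>\<sigma>. y (\<phi> \<sigma>))"
    have xo: "x \<circ> \<phi> = X" by (simp add: X_def o_def)
    have yo: "y \<circ> \<phi> = Y" by (simp add: Y_def o_def)
    have CX: "Cn J n X" for n unfolding X_def by (rule Cn_comp[OF openJ I_open \<phi>I Cx C\<phi>])
    have CY: "Cn J n Y" for n unfolding Y_def by (rule Cn_comp[OF openJ I_open \<phi>I Cy C\<phi>])
    define X1 where "X1 = deriv X"
    define Y1 where "Y1 = deriv Y"
    have CX1: "Cn J n X1" for n using CX[of "Suc n"] by (simp add: X1_def)
    have CY1: "Cn J n Y1" for n using CY[of "Suc n"] by (simp add: Y1_def)
    have dX: "(X has_real_derivative X1 \<sigma>) (at \<sigma>)" if "\<sigma> \<in> J" for \<sigma>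
      unfolding X1_def by (rule Cn_diff[OF CX that])
    have dY: "(Y has_real_derivative Y1 \<sigma>) (at \<sigma>)" if "\<sigma> \<in> J" for \<sigma>
      unfolding Y1_def by (rule Cn_diff[OF CY that])
    have dX1: "(X1 has_real_derivative deriv X1 \<sigma>) (at \<sigma>)" if "\<sigma> \<in> J" for \<sigma>
      by (rule Cn_diff[OF CX1 that])
    have X1v: "X1 \<sigma> = x1 (\<phi> \<sigma>) * inverse (L (\<phi> \<sigma>))" if s: "\<sigma> \<in> J" for \<sigma>
    proof -
      have "(X has_real_derivative x1 (\<phi> \<sigma>) * inverse (L (\<phi> \<sigma>))) (at \<sigma>)"
        unfolding X_def by (rule DERIV_chain2[OF dx[OF \<phi>I[OF s]] d\<phi>[OF s]])
      then show ?thesis unfolding X1_def by (rule DERIV_imp_deriv)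
    qed
    have Y1v: "Y1 \<sigma> = y1 (\<phi> \<sigma>) * inverse (L (\<phi> \<sigma>))" if s: "\<sigma> \<in> J" for \<sigma>
    proof -
      have "(Y has_real_derivative y1 (\<phi> \<sigma>) * inverse (L (\<phi> \<sigma>))) (at \<sigma>)"
        unfolding Y_def by (rule DERIV_chain2[OF dy[OF \<phi>I[OF s]] d\<phi>[OF s]])
      then show ?thesis unfolding Y1_def by (rule DERIV_imp_deriv)
    qed
    define PX where "PX = (\<lambda>\<sigma>. 1 - lam * (sin (X \<sigma>))\<^sup>2)"
    have PXpos: "PX \<sigma> > 0" for \<sigma> unfolding PX_def by (rule P_pos[OF tau_pos lam_def])
    have PXv: "PX \<sigma> = Pf (\<phi> \<sigma>)" for \<sigma> unfolding PX_def Pf_def X_def ..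
    have CsX: "Cn J n (\<lambda>s. sin (X s))" for n by (rule Cn_comp[OF openJ open_UNIV _ Csin CX]) simp
    have CcX: "Cn J n (\<lambda>s. cos (X s))" for n by (rule Cn_comp[OF openJ open_UNIV _ Ccos CX]) simp
    have CPX: "Cn J n PX" for n unfolding PX_def
      by (rule Cn_sub[OF openJ Cn_const Cn_mult[OF openJ Cn_const Cn_pow2[OF openJ CsX]]])
    have CsqPX: "Cn J n (\<lambda>s. sqrt (PX s))" for n
      by (rule Cn_comp[OF openJ open_greaterThan _ Cn_sqrt CPX]) (use PXpos in simp)
    define w where "w = (\<lambda>\<sigma>. \<tau> * cos (X \<sigma>) * Y1 \<sigma> / sqrt (PX \<sigma>))"
    have Cw: "Cn J n w" for n unfolding w_def
      by (rule Cn_divide[OF openJ Cn_mult[OF openJ Cn_mult[OF openJ Cn_const CcX] CY1] CsqPX])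
         (metis PXpos less_irrefl real_sqrt_eq_zero_cancel_iff)
    have dw: "(w has_real_derivative deriv w \<sigma>) (at \<sigma>)" if "\<sigma> \<in> J" for \<sigma>
      by (rule Cn_diff[OF Cw that])
    have cosX: "cos (X \<sigma>) \<noteq> 0" if "\<sigma> \<in> J" for \<sigma> unfolding X_def using cos_nz \<phi>I[OF that] by blast
    have sinX: "sin (X \<sigma>) > 0" if "\<sigma> \<in> J" for \<sigma> unfolding X_def using sin_pos \<phi>I[OF that] by blast
    have unit: "(X1 \<sigma>)\<^sup>2 + (w \<sigma>)\<^sup>2 = 1" if s: "\<sigma> \<in> J" for \<sigma>
    proof -
      have Lp: "L (\<phi> \<sigma>) > 0" using Lpos[OF \<phi>I[OF s]] .
      have L2': "(L (\<phi> \<sigma>))\<^sup>2 = R (\<phi> \<sigma>)" using L2[OF \<phi>I[OF s]] .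
      have sq: "(sqrt (PX \<sigma>))\<^sup>2 = PX \<sigma>" using PXpos[of \<sigma>] by simp
      have "(X1 \<sigma>)\<^sup>2 + (w \<sigma>)\<^sup>2 = R (\<phi> \<sigma>) / (L (\<phi> \<sigma>))\<^sup>2"
        unfolding w_def X1v[OF s] Y1v[OF s] R_def PXv[symmetric]
        using Lp PXpos[of \<sigma>] sq by (simp add: X_def field_simps power2_eq_square)
      then show ?thesis using L2' Rpos[OF \<phi>I[OF s]] by simp
    qed
    have dunit: "X1 \<sigma> * deriv X1 \<sigma> + w \<sigma> * deriv w \<sigma> = 0" if s: "\<sigma> \<in> J" for \<sigma>
    proof -
      have D1: "((\<lambda>\<sigma>. X1 \<sigma> * X1 \<sigma> + w \<sigma> * w \<sigma>) has_real_derivative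
          deriv X1 \<sigma> * X1 \<sigma> + deriv X1 \<sigma> * X1 \<sigma> + (deriv w \<sigma> * w \<sigma> + deriv w \<sigma> * w \<sigma>)) (at \<sigma>)"
        by (rule DERIV_add[OF DERIV_mult[OF dX1[OF s] dX1[OF s]] DERIV_mult[OF dw[OF s] dw[OF s]]])
      have D0: "((\<lambda>\<sigma>. X1 \<sigma> * X1 \<sigma> + w \<sigma> * w \<sigma>) has_real_derivative 0) (at \<sigma>)"
      proof (rule has_field_derivative_transform_within_open[OF _ openJ s])
        show "((\<lambda>_. 1) has_real_derivative 0) (at \<sigma>)" by simp
        show "\<And>u. u \<in> J \<Longrightarrow> 1 = X1 u * X1 u + w u * w u" using unit by (simp add: power2_eq_square)
      qed
      have "deriv X1 \<sigma> * X1 \<sigma> + deriv X1 \<sigma> * X1 \<sigma> + (deriv w \<sigma> * w \<sigma> + deriv w \<sigma> * w \<sigma>) = 0"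
        using DERIV_unique[OF D1 D0] .
      then show ?thesis by (simp add: algebra_simps)
    qed
    have contH: "continuous_on J (\<lambda>\<sigma>. X1 \<sigma> * deriv w \<sigma> - w \<sigma> * deriv X1 \<sigma>)"
    proof -
      have a: "Cn J 1 (deriv w)" using Cw[of 2] by (simp add: numeral_2_eq_2)
      have b: "Cn J 1 (deriv X1)" using CX1[of 2] by (simp add: numeral_2_eq_2)
      have "Cn J 1 (\<lambda>\<sigma>. X1 \<sigma> * deriv w \<sigma> - w \<sigma> * deriv X1 \<sigma>)"
        by (rule Cn_sub[OF openJ Cn_mult[OF openJ CX1 a] Cn_mult[OF openJ Cw b]])
      then show ?thesis using Cn_cont[of J 0] by simp
    qed
    obtain \<alpha> where d\<alpha>: "\<And>\<sigma>. \<sigma> \<in> J \<Longrightarrow> (\<alpha> has_real_derivative (X1 \<sigma> * deriv w \<sigma> - w \<sigma> * deriv X1 \<sigma>)) (at \<sigma>)"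
      and c\<alpha>: "\<And>\<sigma>. \<sigma> \<in> J \<Longrightarrow> cos (\<alpha> \<sigma>) = X1 \<sigma>" and s\<alpha>: "\<And>\<sigma>. \<sigma> \<in> J \<Longrightarrow> sin (\<alpha> \<sigma>) = w \<sigma>"
      using angle_lift[OF openJ intJ Jne dX1 dw contH unit dunit] by blast
    have dphi_ne: "deriv \<phi> \<sigma> \<noteq> 0" if s: "\<sigma> \<in> J" for \<sigma>
    proof -
      have "deriv \<phi> \<sigma> = inverse (L (\<phi> \<sigma>))" by (rule DERIV_imp_deriv[OF d\<phi>[OF s]])
      then show ?thesis using Lpos[OF \<phi>I[OF s]] by simp
    qed
    have xX: "x (\<phi> \<sigma>) = X \<sigma>" for \<sigma> by (simp add: X_def)
    define e where "e = (\<lambda>s. X1 s^2 + Y1 s^2 * (cos (X s))^2 * (1 - (1 - \<tau>^2) * (cos (X s))^2))"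
    define f where "f = (\<lambda>s. - (1 - \<tau>^2) * Y1 s * (cos (X s))^2 * (sin (X s))^2)"
    define g where "g = (\<lambda>s. (sin (X s))^2 * (1 - (1 - \<tau>^2) * (sin (X s))^2))"
    define g1 where "g1 = (\<lambda>s. 2 * sin (X s) * cos (X s) * X1 s * (1 - 2 * (1 - \<tau>^2) * (sin (X s))^2))"
    have Ce: "Cn J n e" for n unfolding e_def
      by (rule Cn_add[OF openJ Cn_pow2[OF openJ CX1] Cn_mult[OF openJ Cn_mult[OF openJ Cn_pow2[OF openJ CY1]
            Cn_pow2[OF openJ CcX]] Cn_sub[OF openJ Cn_const Cn_mult[OF openJ Cn_const Cn_pow2[OF openJ CcX]]]]])
    have Cf: "Cn J n f" for n unfolding f_def
      by (rule Cn_mult[OF openJ Cn_mult[OF openJ Cn_mult[OF openJ Cn_const CY1] Cn_pow2[OF openJ CcX]] Cn_pow2[OF openJ CsX]])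
    have de: "(e has_real_derivative deriv e s) (at s)" if "s \<in> J" for s by (rule Cn_diff[OF Ce that])
    have df: "(f has_real_derivative deriv f s) (at s)" if "s \<in> J" for s by (rule Cn_diff[OF Cf that])
    have dg: "(g has_real_derivative g1 s) (at s)" if s: "s \<in> J" for s
      unfolding g_def g1_def using dX[OF s]
      by (auto intro!: derivative_eq_intros simp: algebra_simps power2_eq_square)
    have c1: "(X1 s)\<^sup>2 * PX s + \<tau>\<^sup>2 * (cos (X s))\<^sup>2 * (Y1 s)\<^sup>2 = PX s" if s: "s \<in> J" for s
    proof -
      have sq: "(sqrt (PX s))\<^sup>2 = PX s" using PXpos[of s] by simp
      have "(X1 s)\<^sup>2 * PX s + \<tau>\<^sup>2 * (cos (X s))\<^sup>2 * (Y1 s)\<^sup>2 = ((X1 s)\<^sup>2 + (w s)\<^sup>2) * PX s"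
        unfolding w_def using PXpos[of s] sq by (simp add: field_simps power2_eq_square)
      then show ?thesis using unit[OF s] by simp
    qed
    have EG: "e s * g s - (f s)\<^sup>2 = g s" if s: "s \<in> J" for s
      unfolding e_def f_def g_def using c1[OF s] sin_cos_squared_add[of "X s"] unfolding PX_def lam_def
      by algebra
    have DER: "deriv e s * g s + g1 s * e s - (deriv f s * f s + deriv f s * f s) - g1 s = 0" if s: "s \<in> J" for s
    proof -
      have D1: "((\<lambda>s. e s * g s - f s * f s - g s) has_real_derivative
         deriv e s * g s + g1 s * e s - (deriv f s * f s + deriv f s * f s) - g1 s) (at s)"
        by (rule DERIV_diff[OF DERIV_diff[OF DERIV_mult[OF de[OF s] dg[OF s]] DERIV_mult[OF df[OF s] df[OF s]]] dg[OF s]])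
      have D0: "((\<lambda>s. e s * g s - f s * f s - g s) has_real_derivative 0) (at s)"
      proof (rule has_field_derivative_transform_within_open[OF _ openJ s])
        show "((\<lambda>_. 0) has_real_derivative 0) (at s)" by simp
        show "\<And>u. u \<in> J \<Longrightarrow> 0 = e u * g u - f u * f u - g u" using EG by (simp add: power2_eq_square)
      qed
      show ?thesis using DERIV_unique[OF D1 D0] .
    qed
    show ?thesis
    proof (rule exI[of _ J], rule exI[of _ \<phi>], intro conjI)
      show "open J" by (rule openJ)
      show "is_interval J" by (rule intJ)
      show "bij_betw \<phi> J I" by (rule bij)
      show "smooth_on J \<phi>" by (rule Cn_imp_smooth[OF C\<phi>])
      show "\<forall>\<sigma>\<in>J. deriv \<phi> \<sigma> \<noteq> 0" using dphi_ne by blast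
      show "\<exists>\<alpha> :: real \<Rightarrow> real. \<forall>\<sigma>\<in>J.
            \<alpha> differentiable (at \<sigma>) \<and>
            deriv (x \<circ> \<phi>) \<sigma> = cos (\<alpha> \<sigma>) \<and>
            deriv (y \<circ> \<phi>) \<sigma> = (1 / \<tau>) * (sqrt (1 - lam * (sin (x (\<phi> \<sigma>)))\<^sup>2) / cos (x (\<phi> \<sigma>))) * sin (\<alpha> \<sigma>) \<and>
            (\<forall>t. deriv \<alpha> \<sigma> * sin (\<alpha> \<sigma>) =
               tan (x (\<phi> \<sigma>)) *
                 ((1 - lam * (sin (x (\<phi> \<sigma>)))\<^sup>2) / (1 - 2 * lam * (sin (x (\<phi> \<sigma>)))\<^sup>2)
                     * rot_gauss_curvature \<tau> (x \<circ> \<phi>) (y \<circ> \<phi>) (\<sigma>, t)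
                  - (cos (\<alpha> \<sigma>))\<^sup>2 * ((1 - lam) / (1 - lam * (sin (x (\<phi> \<sigma>)))\<^sup>2)
                     + 4 * lam * (cos (x (\<phi> \<sigma>)))\<^sup>2 / (1 - 2 * lam * (sin (x (\<phi> \<sigma>)))\<^sup>2))))"
      proof (rule exI[of _ \<alpha>], intro ballI conjI)
        fix \<sigma> assume s: "\<sigma> \<in> J"
        show "\<alpha> differentiable (at \<sigma>)" using d\<alpha>[OF s] real_differentiable_def by blast
        show "deriv (x \<circ> \<phi>) \<sigma> = cos (\<alpha> \<sigma>)" unfolding xo X1_def[symmetric] using c\<alpha>[OF s] by simp
        show "deriv (y \<circ> \<phi>) \<sigma> = (1 / \<tau>) * (sqrt (1 - lam * (sin (x (\<phi> \<sigma>)))\<^sup>2) / cos (x (\<phi> \<sigma>))) * sin (\<alpha> \<sigma>)"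
        proof -
          have "sqrt (1 - lam * (sin (x (\<phi> \<sigma>)))\<^sup>2) = sqrt (PX \<sigma>)" unfolding PX_def xX ..
          moreover have "sqrt (PX \<sigma>) > 0" using PXpos[of \<sigma>] by simp
          ultimately show ?thesis unfolding yo Y1_def[symmetric] s\<alpha>[OF s] w_def xX
            using cosX[OF s] tau_pos by (simp add: field_simps)
        qed
        show "\<forall>t. deriv \<alpha> \<sigma> * sin (\<alpha> \<sigma>) =
               tan (x (\<phi> \<sigma>)) *
                 ((1 - lam * (sin (x (\<phi> \<sigma>)))\<^sup>2) / (1 - 2 * lam * (sin (x (\<phi> \<sigma>)))\<^sup>2)
                     * rot_gauss_curvature \<tau> (x \<circ> \<phi>) (y \<circ> \<phi>) (\<sigma>, t)
                  - (cos (\<alpha> \<sigma>))\<^sup>2 * ((1 - lam) / (1 - lam * (sin (x (\<phi> \<sigma>)))\<^sup>2)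
                     + 4 * lam * (cos (x (\<phi> \<sigma>)))\<^sup>2 / (1 - 2 * lam * (sin (x (\<phi> \<sigma>)))\<^sup>2)))"
        proof
          fix t
          define G2 where "G2 = 2 * (X1 \<sigma>)^2 * (((cos (X \<sigma>))^2 - (sin (X \<sigma>))^2) * (1 - 2 * (1 - \<tau>^2) * (sin (X \<sigma>))^2)
              - 4 * (1 - \<tau>^2) * (sin (X \<sigma>))^2 * (cos (X \<sigma>))^2)
              + 2 * sin (X \<sigma>) * cos (X \<sigma>) * (1 - 2 * (1 - \<tau>^2) * (sin (X \<sigma>))^2) * deriv X1 \<sigma>"
          have dg1: "(g1 has_real_derivative G2) (at \<sigma>)"
            unfolding g1_def G2_def using dX[OF s] dX1[OF s]
            by (auto intro!: derivative_eq_intros simp: algebra_simps power2_eq_square)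
          have KB: "rot_gauss_curvature \<tau> X Y (\<sigma>, t) =
             (- G2 / 2 * (e \<sigma> * g \<sigma> - (f \<sigma>)^2) + deriv e \<sigma> * g1 \<sigma> * g \<sigma> / 4 - deriv f \<sigma> * g1 \<sigma> * f \<sigma> / 2
               + e \<sigma> * (g1 \<sigma>)^2 / 4) / (e \<sigma> * g \<sigma> - (f \<sigma>)^2)^2"
            by (rule brioschi_eval[OF openJ s dX dY dX1 e_def f_def g_def g1_def de df dg1])
          have num: "- G2 / 2 * (e \<sigma> * g \<sigma> - (f \<sigma>)^2) + deriv e \<sigma> * g1 \<sigma> * g \<sigma> / 4 - deriv f \<sigma> * g1 \<sigma> * f \<sigma> / 2
               + e \<sigma> * (g1 \<sigma>)^2 / 4 = (g1 \<sigma>)^2 / 4 - g \<sigma> * G2 / 2"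
          proof -
            have "- G2 / 2 * (e \<sigma> * g \<sigma> - (f \<sigma>)^2) + deriv e \<sigma> * g1 \<sigma> * g \<sigma> / 4 - deriv f \<sigma> * g1 \<sigma> * f \<sigma> / 2
               + e \<sigma> * (g1 \<sigma>)^2 / 4 = - G2 / 2 * (e \<sigma> * g \<sigma> - (f \<sigma>)^2) + g1 \<sigma> *
                 (deriv e \<sigma> * g \<sigma> + g1 \<sigma> * e \<sigma> - (deriv f \<sigma> * f \<sigma> + deriv f \<sigma> * f \<sigma>)) / 4"
              by (simp add: field_simps power2_eq_square)
            also have "... = - G2 / 2 * g \<sigma> + g1 \<sigma> * g1 \<sigma> / 4"
              using DER[OF s] EG[OF s] by simp
            finally show ?thesis by (simp add: power2_eq_square)
          qed
          have Kval: "rot_gauss_curvature \<tau> X Y (\<sigma>, t) = ((g1 \<sigma>)^2 / 4 - g \<sigma> * G2 / 2) / (g \<sigma>)^2"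
            unfolding KB unfolding num unfolding EG[OF s] ..
          have da': "deriv \<alpha> \<sigma> = X1 \<sigma> * deriv w \<sigma> - w \<sigma> * deriv X1 \<sigma>"
            by (rule DERIV_imp_deriv[OF d\<alpha>[OF s]])
          have lhs: "deriv \<alpha> \<sigma> * sin (\<alpha> \<sigma>) = - deriv X1 \<sigma>"
          proof -
            have "deriv \<alpha> \<sigma> * sin (\<alpha> \<sigma>) = - deriv X1 \<sigma> * ((X1 \<sigma>)\<^sup>2 + (w \<sigma>)\<^sup>2) + X1 \<sigma> * (X1 \<sigma> * deriv X1 \<sigma> + w \<sigma> * deriv w \<sigma>)"
              unfolding da' s\<alpha>[OF s] by (simp add: algebra_simps power2_eq_square)
            then show ?thesis using unit[OF s] dunit[OF s] by simp
          qed
          have S0: "sin (X \<sigma>) \<noteq> 0" using sinX[OF s] by simp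
          have Pn: "1 - (1 - \<tau>^2) * (sin (X \<sigma>))^2 \<noteq> 0" using PXpos[of \<sigma>] unfolding PX_def lam_def by simp
          have Qn: "1 - 2 * (1 - \<tau>^2) * (sin (X \<sigma>))^2 \<noteq> 0" 
          proof -
            have "1 - 2 * lam * (sin (X \<sigma>))^2 \<noteq> 0" using den_nz \<phi>I[OF s] unfolding X_def by blast
            then show ?thesis unfolding lam_def .
          qed
          have Kexp: "rot_gauss_curvature \<tau> X Y (\<sigma>, t) =
              ((2 * sin (X \<sigma>) * cos (X \<sigma>) * X1 \<sigma> * (1 - 2 * (1 - \<tau>^2) * (sin (X \<sigma>))^2))^2 / 4
              - ((sin (X \<sigma>))^2 * (1 - (1 - \<tau>^2) * (sin (X \<sigma>))^2)) * (2 * (X1 \<sigma>)^2 * (((cos (X \<sigma>))^2 - (sin (X \<sigma>))^2) * (1 - 2 * (1 - \<tau>^2) * (sin (X \<sigma>))^2)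
                - 4 * (1 - \<tau>^2) * (sin (X \<sigma>))^2 * (cos (X \<sigma>))^2)
                + 2 * sin (X \<sigma>) * cos (X \<sigma>) * (1 - 2 * (1 - \<tau>^2) * (sin (X \<sigma>))^2) * deriv X1 \<sigma>) / 2) /
              ((sin (X \<sigma>))^2 * (1 - (1 - \<tau>^2) * (sin (X \<sigma>))^2))^2"
              unfolding Kval g1_def g_def G2_def ..
          have fin: "- deriv X1 \<sigma> = (sin (X \<sigma>) / cos (X \<sigma>)) * ((1 - (1 - \<tau>^2) * (sin (X \<sigma>))^2) / (1 - 2 * (1 - \<tau>^2) * (sin (X \<sigma>))^2)
              * rot_gauss_curvature \<tau> X Y (\<sigma>, t)
              - (X1 \<sigma>)^2 * ((1 - (1 - \<tau>^2)) / (1 - (1 - \<tau>^2) * (sin (X \<sigma>))^2) + 4 * (1 - \<tau>^2) * (cos (X \<sigma>))^2 / (1 - 2 * (1 - \<tau>^2) * (sin (X \<sigma>))^2)))"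
            by (rule alg_final[OF sin_cos_squared_add Pn Qn S0 cosX[OF s] Kexp])
          show "deriv \<alpha> \<sigma> * sin (\<alpha> \<sigma>) =
               tan (x (\<phi> \<sigma>)) *
                 ((1 - lam * (sin (x (\<phi> \<sigma>)))\<^sup>2) / (1 - 2 * lam * (sin (x (\<phi> \<sigma>)))\<^sup>2)
                     * rot_gauss_curvature \<tau> (x \<circ> \<phi>) (y \<circ> \<phi>) (\<sigma>, t)
                  - (cos (\<alpha> \<sigma>))\<^sup>2 * ((1 - lam) / (1 - lam * (sin (x (\<phi> \<sigma>)))\<^sup>2)
                     + 4 * lam * (cos (x (\<phi> \<sigma>)))\<^sup>2 / (1 - 2 * lam * (sin (x (\<phi> \<sigma>)))\<^sup>2)))"
            unfolding lhs xX xo yo c\<alpha>[OF s] tan_def lam_def using fin by simp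
        qed
      qed
    qed
  qed
  show ?thesis using part1 part2 by (rule conjI)
qed

end
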